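(* Let $(M,P,g)$ be a 4-dimensional $\mathcal W_1$-manifold which admits the natural connection $\widetilde D$ (parameters $\lambda=0$, $\mu=-\frac14$) and suppose the curvature tensor of $\widetilde D$ is a Riemannian $P$-tensor. Then the curvature tensor $R$ of the Levi-Civita connection, with scalar curvatures $\tau,\tau^*$, has the form $$R=\frac1{64}\left\{8\tau+4\,\delta+5\,\theta(\Omega)\right\}(\pi_1+\pi_2)+\frac1{64}\left\{8\tau^*-4\operatorname{div}\Omega+\theta(P\Omega)\right\}\pi_3-\frac{\theta(\Omega)}{16}\pi_2-\psi_1(S')-\psi_2(S''),$$ where $S'(y,z)=\frac1{16}\theta(y)\theta(z)$ and $S''(y,z)=-\frac14(\widetilde D_y\theta)(Pz)-\frac1{16}\theta(Py)\theta(Pz)$.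
   Context: A Riemannian almost product manifold $(M,P,g)$: $M$ smooth, $P$ a $(1,1)$-tensor field with $P^2=\mathrm{id}$, $g$ Riemannian with $g(Px,Py)=g(x,y)$; $\operatorname{tr}P=0$, $\dim M=2n$ (here $n=2$). $\nabla$ is the Levi-Civita connection, curvature $R(x,y)z=\nabla_x\nabla_yz-\nabla_y\nabla_xz-\nabla_{[x,y]}z$, $R(x,y,z,w)=g(R(x,y)z,w)$, $\tau=\sum g^{ij}g^{ks}R(e_k,e_i,e_j,e_s)$, $\tau^*=\sum g^{ij}g^{ks}R(e_k,e_i,e_j,Pe_s)$ ($g^{ij}$ the inverse matrix of $g$ in a basis $\{e_i\}$). $F(x,y,z)=g((\nabla_xP)y,z)$, $\theta(x)=\sum g^{ij}F(e_i,e_j,x)$, $g(\Omega,x)=\theta(x)$. $\operatorname{div}\Omega=\sum g^{ij}(\nabla_{e_i}\theta)(e_j)$ and $\delta=\sum g^{ij}(\nabla_{e_i}\theta)(Pe_j)$. $(M,P,g)$ is a $\mathcal W_1$-manifold if $F(x,y,z)=\frac1{2n}\{g(x,y)\theta(z)-g(x,Py)\theta(Pz)+g(x,z)\theta(y)-g(x,Pz)\theta(Py)\}$. A natural connection is a linear connection with $\nabla'P=\nabla'g=0$; $\widetilde D$ is the natural connection with torsion $g(\widetilde D_xy-\widetilde D_yx-[x,y],z)=-\frac1{2n}\{g(y,Pz)\theta(x)-g(x,Pz)\theta(y)\}$; explicitly (for $n=2$) $\widetilde D_yz=\nabla_yz+\frac14\{\theta(z)Py-g(y,Pz)\Omega\}$.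 A Riemannian $P$-tensor is a $(0,4)$-tensor $L$ with $L(x,y,z,w)=-L(y,x,z,w)=-L(x,y,w,z)$, $L(x,y,z,w)+L(y,z,x,w)+L(z,x,y,w)=0$, $L(x,y,Pz,Pw)=L(x,y,z,w)$. $\widetilde g(x,y)=g(x,Py)$; $\psi_1(S)(x,y,z,w)=g(y,z)S(x,w)-g(x,z)S(y,w)+S(y,z)g(x,w)-S(x,z)g(y,w)$, $\psi_2(S)(x,y,z,w)=\psi_1(S)(x,y,Pz,Pw)$; $\pi_1=\frac12\psi_1(g)$, $\pi_2=\frac12\psi_2(g)$, $\pi_3=\psi_1(\widetilde g)$. *)

theory Defs
  imports "HOL-Analysis.Analysis"
begin

text \<open>Local (chart) model: the manifold M is an open set U in a 4-dimensional
Euclidean space 'a.  All tensors are evaluated on vector fields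
pointwise.\<close>

fun Ck :: "nat \<Rightarrow> 'a::real_normed_vector set \<Rightarrow> ('a \<Rightarrow> 'b::real_normed_vector) \<Rightarrow> bool" where
  "Ck 0 U f = continuous_on U f"
| "Ck (Suc k) U f = (f differentiable_on U \<and> (\<forall>v. Ck k U (\<lambda>p. frechet_derivative f (at p) v)))"

definition smooth_on' :: "'a::real_normed_vector set \<Rightarrow> ('a \<Rightarrow> 'b::real_normed_vector) \<Rightarrow> bool" where
  "smooth_on' U f = (\<forall>k. Ck k U f)"

definition vf :: "'a::euclidean_space set \<Rightarrow> ('a \<Rightarrow> 'a) set" where
  "vf U = {X. smooth_on' U X}"

definition cf :: "'a \<Rightarrow> ('a \<Rightarrow> 'a)" where
  "cf u = (\<lambda>_. u)"

definition gF :: "('a \<Rightarrow> 'a \<Rightarrow> 'a \<Rightarrow> real) \<Rightarrow> ('a \<Rightarrow> 'a) \<Rightarrow> ('a \<Rightarrow> 'a) \<Rightarrow> 'a \<Rightarrow> real" where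
  "gF g X Y = (\<lambda>p. g p (X p) (Y p))"

definition PF :: "('a \<Rightarrow> 'a \<Rightarrow> 'a) \<Rightarrow> ('a \<Rightarrow> 'a) \<Rightarrow> ('a \<Rightarrow> 'a)" where
  "PF P X = (\<lambda>p. P p (X p))"

definition ddir :: "('a::real_normed_vector \<Rightarrow> 'a) \<Rightarrow> ('a \<Rightarrow> 'b::real_normed_vector) \<Rightarrow> 'a \<Rightarrow> 'b" where
  "ddir X f = (\<lambda>p. frechet_derivative f (at p) (X p))"

definition lie :: "('a::real_normed_vector \<Rightarrow> 'a) \<Rightarrow> ('a \<Rightarrow> 'a) \<Rightarrow> 'a \<Rightarrow> 'a" where
  "lie X Y = (\<lambda>p. ddir X Y p - ddir Y X p)"

definition rapm :: "'a::euclidean_space set \<Rightarrow> ('a \<Rightarrow> 'a \<Rightarrow> 'a \<Rightarrow> real) \<Rightarrow> ('a \<Rightarrow> 'a \<Rightarrow> 'a) \<Rightarrow> bool" where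
  "rapm U g P = (open U \<and> U \<noteq> {} \<and> DIM('a) = 4 \<and>
     (\<forall>u v. smooth_on' U (\<lambda>p. g p u v)) \<and> (\<forall>u. smooth_on' U (\<lambda>p. P p u)) \<and>
     (\<forall>p\<in>U. bilinear (g p) \<and> (\<forall>u v. g p u v = g p v u) \<and> (\<forall>u. u \<noteq> 0 \<longrightarrow> g p u u > 0) \<and>
        linear (P p) \<and> (\<forall>u. P p (P p u) = u) \<and>
        (\<forall>u v. g p (P p u) (P p v) = g p u v) \<and>
        (\<Sum>b\<in>Basis. P p b \<bullet> b) = 0))"

definition is_LC :: "'a::euclidean_space set \<Rightarrow> ('a \<Rightarrow> 'a \<Rightarrow> 'a \<Rightarrow> real)
    \<Rightarrow> (('a \<Rightarrow> 'a) \<Rightarrow> ('a \<Rightarrow> 'a) \<Rightarrow> ('a \<Rightarrow> 'a)) \<Rightarrow> bool" where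
  "is_LC U g nabla = (\<forall>X\<in>vf U. \<forall>Y\<in>vf U. nabla X Y \<in> vf U \<and>
     (\<forall>Z\<in>vf U. \<forall>f::'a \<Rightarrow> real. smooth_on' U f \<longrightarrow> (\<forall>p\<in>U.
        nabla (\<lambda>q. X q + Y q) Z p = nabla X Z p + nabla Y Z p \<and>
        nabla (\<lambda>q. f q *\<^sub>R X q) Z p = f p *\<^sub>R nabla X Z p \<and>
        nabla X (\<lambda>q. Y q + Z q) p = nabla X Y p + nabla X Z p \<and>
        nabla X (\<lambda>q. f q *\<^sub>R Y q) p = ddir X f p *\<^sub>R Y p + f p *\<^sub>R nabla X Y p \<and>
        nabla X Y p - nabla Y X p = lie X Y p \<and>
        ddir X (gF g Y Z) p = gF g (nabla X Y) Z p + gF g Y (nabla X Z) p)))"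

definition curv :: "(('a::real_normed_vector \<Rightarrow> 'a) \<Rightarrow> ('a \<Rightarrow> 'a) \<Rightarrow> ('a \<Rightarrow> 'a))
    \<Rightarrow> ('a \<Rightarrow> 'a) \<Rightarrow> ('a \<Rightarrow> 'a) \<Rightarrow> ('a \<Rightarrow> 'a) \<Rightarrow> 'a \<Rightarrow> 'a" where
  "curv D X Y Z = (\<lambda>p. D X (D Y Z) p - D Y (D X Z) p - D (lie X Y) Z p)"

definition curv4 :: "('a \<Rightarrow> 'a \<Rightarrow> 'a \<Rightarrow> real) \<Rightarrow> (('a::real_normed_vector \<Rightarrow> 'a) \<Rightarrow> ('a \<Rightarrow> 'a) \<Rightarrow> ('a \<Rightarrow> 'a))
    \<Rightarrow> ('a \<Rightarrow> 'a) \<Rightarrow> ('a \<Rightarrow> 'a) \<Rightarrow> ('a \<Rightarrow> 'a) \<Rightarrow> ('a \<Rightarrow> 'a) \<Rightarrow> 'a \<Rightarrow> real" where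
  "curv4 g D X Y Z W = gF g (curv D X Y Z) W"

text \<open>Inverse matrix g^{ij} of g in the standard basis: the matrix of g(p) is the matrix
of the linear map Gmap g p with respect to Basis, and g^{ij} are the entries of its inverse.\<close>
definition Gmap :: "('a::euclidean_space \<Rightarrow> 'a \<Rightarrow> 'a \<Rightarrow> real) \<Rightarrow> 'a \<Rightarrow> 'a \<Rightarrow> 'a" where
  "Gmap g p u = (\<Sum>b\<in>Basis. g p u b *\<^sub>R b)"

definition ginv :: "('a::euclidean_space \<Rightarrow> 'a \<Rightarrow> 'a \<Rightarrow> real) \<Rightarrow> 'a \<Rightarrow> 'a \<Rightarrow> 'a \<Rightarrow> real" where
  "ginv g p i j = inv (Gmap g p) i \<bullet> j"

definition Ften :: "('a::euclidean_space \<Rightarrow> 'a \<Rightarrow> 'a \<Rightarrow> real) \<Rightarrow> ('a \<Rightarrow> 'a \<Rightarrow> 'a)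
    \<Rightarrow> (('a \<Rightarrow> 'a) \<Rightarrow> ('a \<Rightarrow> 'a) \<Rightarrow> ('a \<Rightarrow> 'a))
    \<Rightarrow> ('a \<Rightarrow> 'a) \<Rightarrow> ('a \<Rightarrow> 'a) \<Rightarrow> ('a \<Rightarrow> 'a) \<Rightarrow> 'a \<Rightarrow> real" where
  "Ften g P nabla X Y Z = gF g (\<lambda>p. nabla X (PF P Y) p - P p (nabla X Y p)) Z"

definition theta :: "('a::euclidean_space \<Rightarrow> 'a \<Rightarrow> 'a \<Rightarrow> real) \<Rightarrow> ('a \<Rightarrow> 'a \<Rightarrow> 'a)
    \<Rightarrow> (('a \<Rightarrow> 'a) \<Rightarrow> ('a \<Rightarrow> 'a) \<Rightarrow> ('a \<Rightarrow> 'a)) \<Rightarrow> ('a \<Rightarrow> 'a) \<Rightarrow> 'a \<Rightarrow> real" where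
  "theta g P nabla X = (\<lambda>p. \<Sum>i\<in>Basis. \<Sum>j\<in>Basis. ginv g p i j * Ften g P nabla (cf i) (cf j) X p)"

definition Omega :: "('a::euclidean_space \<Rightarrow> 'a \<Rightarrow> 'a \<Rightarrow> real) \<Rightarrow> ('a \<Rightarrow> 'a \<Rightarrow> 'a)
    \<Rightarrow> (('a \<Rightarrow> 'a) \<Rightarrow> ('a \<Rightarrow> 'a) \<Rightarrow> ('a \<Rightarrow> 'a)) \<Rightarrow> 'a \<Rightarrow> 'a" where
  "Omega g P nabla = (\<lambda>p. THE v. \<forall>u. g p v u = theta g P nabla (cf u) p)"

definition tau :: "('a::euclidean_space \<Rightarrow> 'a \<Rightarrow> 'a \<Rightarrow> real)
    \<Rightarrow> (('a \<Rightarrow> 'a) \<Rightarrow> ('a \<Rightarrow> 'a) \<Rightarrow> ('a \<Rightarrow> 'a)) \<Rightarrow> 'a \<Rightarrow> real" where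
  "tau g nabla = (\<lambda>p. \<Sum>i\<in>Basis. \<Sum>j\<in>Basis. \<Sum>k\<in>Basis. \<Sum>s\<in>Basis.
      ginv g p i j * ginv g p k s * curv4 g nabla (cf k) (cf i) (cf j) (cf s) p)"

definition taustar :: "('a::euclidean_space \<Rightarrow> 'a \<Rightarrow> 'a \<Rightarrow> real) \<Rightarrow> ('a \<Rightarrow> 'a \<Rightarrow> 'a)
    \<Rightarrow> (('a \<Rightarrow> 'a) \<Rightarrow> ('a \<Rightarrow> 'a) \<Rightarrow> ('a \<Rightarrow> 'a)) \<Rightarrow> 'a \<Rightarrow> real" where
  "taustar g P nabla = (\<lambda>p. \<Sum>i\<in>Basis. \<Sum>j\<in>Basis. \<Sum>k\<in>Basis. \<Sum>s\<in>Basis.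
      ginv g p i j * ginv g p k s * curv4 g nabla (cf k) (cf i) (cf j) (PF P (cf s)) p)"

definition covtheta :: "('a::euclidean_space \<Rightarrow> 'a \<Rightarrow> 'a \<Rightarrow> real) \<Rightarrow> ('a \<Rightarrow> 'a \<Rightarrow> 'a)
    \<Rightarrow> (('a \<Rightarrow> 'a) \<Rightarrow> ('a \<Rightarrow> 'a) \<Rightarrow> ('a \<Rightarrow> 'a))
    \<Rightarrow> (('a \<Rightarrow> 'a) \<Rightarrow> ('a \<Rightarrow> 'a) \<Rightarrow> ('a \<Rightarrow> 'a)) \<Rightarrow> ('a \<Rightarrow> 'a) \<Rightarrow> ('a \<Rightarrow> 'a) \<Rightarrow> 'a \<Rightarrow> real" where
  "covtheta g P nabla D X Y = (\<lambda>p. ddir X (theta g P nabla Y) p - theta g P nabla (D X Y) p)"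

definition divOmega :: "('a::euclidean_space \<Rightarrow> 'a \<Rightarrow> 'a \<Rightarrow> real) \<Rightarrow> ('a \<Rightarrow> 'a \<Rightarrow> 'a)
    \<Rightarrow> (('a \<Rightarrow> 'a) \<Rightarrow> ('a \<Rightarrow> 'a) \<Rightarrow> ('a \<Rightarrow> 'a)) \<Rightarrow> 'a \<Rightarrow> real" where
  "divOmega g P nabla = (\<lambda>p. \<Sum>i\<in>Basis. \<Sum>j\<in>Basis.
      ginv g p i j * covtheta g P nabla nabla (cf i) (cf j) p)"

definition deltaP :: "('a::euclidean_space \<Rightarrow> 'a \<Rightarrow> 'a \<Rightarrow> real) \<Rightarrow> ('a \<Rightarrow> 'a \<Rightarrow> 'a)
    \<Rightarrow> (('a \<Rightarrow> 'a) \<Rightarrow> ('a \<Rightarrow> 'a) \<Rightarrow> ('a \<Rightarrow> 'a)) \<Rightarrow> 'a \<Rightarrow> real" where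
  "deltaP g P nabla = (\<lambda>p. \<Sum>i\<in>Basis. \<Sum>j\<in>Basis.
      ginv g p i j * covtheta g P nabla nabla (cf i) (PF P (cf j)) p)"

definition is_W1 :: "'a::euclidean_space set \<Rightarrow> ('a \<Rightarrow> 'a \<Rightarrow> 'a \<Rightarrow> real) \<Rightarrow> ('a \<Rightarrow> 'a \<Rightarrow> 'a)
    \<Rightarrow> (('a \<Rightarrow> 'a) \<Rightarrow> ('a \<Rightarrow> 'a) \<Rightarrow> ('a \<Rightarrow> 'a)) \<Rightarrow> bool" where
  "is_W1 U g P nabla = (\<forall>X\<in>vf U. \<forall>Y\<in>vf U. \<forall>Z\<in>vf U. \<forall>p\<in>U.
     Ften g P nabla X Y Z p = (1/4) *
       (gF g X Y p * theta g P nabla Z p - gF g X (PF P Y) p * theta g P nabla (PF P Z) p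
        + gF g X Z p * theta g P nabla Y p - gF g X (PF P Z) p * theta g P nabla (PF P Y) p))"

definition Dtil :: "('a::euclidean_space \<Rightarrow> 'a \<Rightarrow> 'a \<Rightarrow> real) \<Rightarrow> ('a \<Rightarrow> 'a \<Rightarrow> 'a)
    \<Rightarrow> (('a \<Rightarrow> 'a) \<Rightarrow> ('a \<Rightarrow> 'a) \<Rightarrow> ('a \<Rightarrow> 'a)) \<Rightarrow> ('a \<Rightarrow> 'a) \<Rightarrow> ('a \<Rightarrow> 'a) \<Rightarrow> 'a \<Rightarrow> 'a" where
  "Dtil g P nabla Y Z = (\<lambda>p. nabla Y Z p + (1/4) *\<^sub>R
      (theta g P nabla Z p *\<^sub>R P p (Y p) - g p (Y p) (P p (Z p)) *\<^sub>R Omega g P nabla p))"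

definition is_RPtensor :: "'a::euclidean_space set \<Rightarrow> ('a \<Rightarrow> 'a \<Rightarrow> 'a)
    \<Rightarrow> (('a \<Rightarrow> 'a) \<Rightarrow> ('a \<Rightarrow> 'a) \<Rightarrow> ('a \<Rightarrow> 'a) \<Rightarrow> ('a \<Rightarrow> 'a) \<Rightarrow> 'a \<Rightarrow> real) \<Rightarrow> bool" where
  "is_RPtensor U P L = (\<forall>X\<in>vf U. \<forall>Y\<in>vf U. \<forall>Z\<in>vf U. \<forall>W\<in>vf U. \<forall>p\<in>U.
     L X Y Z W p = - L Y X Z W p \<and> L X Y Z W p = - L X Y W Z p \<and>
     L X Y Z W p + L Y Z X W p + L Z X Y W p = 0 \<and>
     L X Y (PF P Z) (PF P W) p = L X Y Z W p)"

definition psi1 :: "('a \<Rightarrow> 'a \<Rightarrow> 'a \<Rightarrow> real) \<Rightarrow> (('a \<Rightarrow> 'a) \<Rightarrow> ('a \<Rightarrow> 'a) \<Rightarrow> 'a \<Rightarrow> real)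
    \<Rightarrow> ('a \<Rightarrow> 'a) \<Rightarrow> ('a \<Rightarrow> 'a) \<Rightarrow> ('a \<Rightarrow> 'a) \<Rightarrow> ('a \<Rightarrow> 'a) \<Rightarrow> 'a \<Rightarrow> real" where
  "psi1 g S X Y Z W = (\<lambda>p. gF g Y Z p * S X W p - gF g X Z p * S Y W p
      + S Y Z p * gF g X W p - S X Z p * gF g Y W p)"

definition psi2 :: "('a \<Rightarrow> 'a \<Rightarrow> 'a \<Rightarrow> real) \<Rightarrow> ('a \<Rightarrow> 'a \<Rightarrow> 'a) \<Rightarrow> (('a \<Rightarrow> 'a) \<Rightarrow> ('a \<Rightarrow> 'a) \<Rightarrow> 'a \<Rightarrow> real)
    \<Rightarrow> ('a \<Rightarrow> 'a) \<Rightarrow> ('a \<Rightarrow> 'a) \<Rightarrow> ('a \<Rightarrow> 'a) \<Rightarrow> ('a \<Rightarrow> 'a) \<Rightarrow> 'a \<Rightarrow> real" where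
  "psi2 g P S X Y Z W = psi1 g S X Y (PF P Z) (PF P W)"

definition pi1 where "pi1 g X Y Z W = (\<lambda>p. (1/2) * psi1 g (gF g) X Y Z W p)"
definition pi2 where "pi2 g P X Y Z W = (\<lambda>p. (1/2) * psi2 g P (gF g) X Y Z W p)"
definition pi3 where "pi3 g P X Y Z W = psi1 g (\<lambda>A B. gF g A (PF P B)) X Y Z W"

end

theory Submission
  imports Defs
begin


lemma fd_works:
  assumes "open U" "p \<in> U" "f differentiable_on U"
  shows "(f has_derivative frechet_derivative f (at p)) (at p)"
  using assms differentiable_on_eq_differentiable_at frechet_derivative_works by blast

lemma fd_eq:
  assumes "open U" "p \<in> U" "(f has_derivative D) (at p)"
  shows "frechet_derivative f (at p) = D"
  using assms frechet_derivative_at by metis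

lemma Ck_cong:
  assumes "open U" "\<And>x. x \<in> U \<Longrightarrow> f x = h x" "Ck k U f"
  shows "Ck k U h"
  using assms(2,3)
proof (induction k arbitrary: f h)
  case 0 thus ?case using continuous_on_cong by force
next
  case (Suc k)
  have d: "f differentiable_on U" and c: "\<And>v. Ck k U (\<lambda>p. frechet_derivative f (at p) v)"
    using Suc.prems by auto
  have "h differentiable_on U"
    unfolding differentiable_on_eq_differentiable_at[OF assms(1)] differentiable_def
  proof
    fix p assume p: "p \<in> U"
    show "\<exists>D. (h has_derivative D) (at p)"
      using has_derivative_transform_within_open[OF fd_works[OF assms(1) p d] assms(1) p] Suc.prems(1) by blast
  qed
  moreover have "Ck k U (\<lambda>p. frechet_derivative h (at p) v)" for v
  proof (rule Suc.IH[OF _ c[of v]])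
    fix x assume "x \<in> U"
    thus "frechet_derivative f (at x) v = frechet_derivative h (at x) v"
      using frechet_derivative_transform_within_open[of f x U h] d assms(1) Suc.prems(1)
        differentiable_on_eq_differentiable_at by metis
  qed
  ultimately show ?case by simp
qed

lemma Ck_Suc_imp: "Ck (Suc k) U f \<Longrightarrow> Ck k U f"
proof (induction k arbitrary: f)
  case 0 thus ?case using differentiable_imp_continuous_on by auto
next
  case (Suc k) thus ?case by auto
qed

lemma Ck_const: "open U \<Longrightarrow> Ck k U (\<lambda>x. c)"
proof (induction k arbitrary: c)
  case 0 thus ?case by simp
next
  case (Suc k) thus ?case by simp
qed

lemma Ck_linear:
  assumes "open U" "bounded_linear L" "Ck k U f"
  shows "Ck k U (\<lambda>x. L (f x))"
  using assms(3)
proof (induction k arbitrary: f)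
  case 0 thus ?case using assms(2) bounded_linear.continuous_on by (auto intro: continuous_on_compose2[OF linear_continuous_on[OF assms(2)]])
next
  case (Suc k)
  have d: "f differentiable_on U" and c: "\<And>v. Ck k U (\<lambda>p. frechet_derivative f (at p) v)"
    using Suc.prems by auto
  have hd: "((\<lambda>x. L (f x)) has_derivative (\<lambda>v. L (frechet_derivative f (at p) v))) (at p)" if "p \<in> U" for p
    using bounded_linear.has_derivative[OF assms(2) fd_works[OF assms(1) that d]] .
  have "(\<lambda>x. L (f x)) differentiable_on U"
    using hd assms(1) differentiable_on_eq_differentiable_at differentiable_def by blast
  moreover have "Ck k U (\<lambda>p. frechet_derivative (\<lambda>x. L (f x)) (at p) v)" for v
    by (rule Ck_cong[OF assms(1) _ Suc.IH[OF c[of v]]]) (simp add: fd_eq[OF assms(1) _ hd])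
  ultimately show ?case by simp
qed

lemma Ck_add:
  assumes "open U" "Ck k U f" "Ck k U h"
  shows "Ck k U (\<lambda>x. f x + h x)"
  using assms(2,3)
proof (induction k arbitrary: f h)
  case 0 thus ?case by (auto intro: continuous_on_add)
next
  case (Suc k)
  have d: "f differentiable_on U" and c: "\<And>v. Ck k U (\<lambda>p. frechet_derivative f (at p) v)"
    using Suc.prems by auto
  have d2: "h differentiable_on U" and c2: "\<And>v. Ck k U (\<lambda>p. frechet_derivative h (at p) v)"
    using Suc.prems by auto
  have hd: "((\<lambda>x. f x + h x) has_derivative
      (\<lambda>v. frechet_derivative f (at p) v + frechet_derivative h (at p) v)) (at p)"
    if "p \<in> U" for p
    using has_derivative_add[OF fd_works[OF assms(1) that d] fd_works[OF assms(1) that d2]] .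
  have "(\<lambda>x. f x + h x) differentiable_on U"
    using hd assms(1) differentiable_on_eq_differentiable_at differentiable_def by blast
  moreover have "Ck k U (\<lambda>p. frechet_derivative (\<lambda>x. f x + h x) (at p) v)" for v
    by (rule Ck_cong[OF assms(1) _ Suc.IH[OF c[of v] c2[of v]]]) (simp add: fd_eq[OF assms(1) _ hd])
  ultimately show ?case by simp
qed

lemma Ck_bilin:
  fixes prod :: "'b::real_normed_vector \<Rightarrow> 'c::real_normed_vector \<Rightarrow> 'd::real_normed_vector"
    and f :: "'a::real_normed_vector \<Rightarrow> 'b" and h :: "'a \<Rightarrow> 'c"
  assumes "open U" "bounded_bilinear prod" "Ck k U f" "Ck k U h"
  shows "Ck k U (\<lambda>x. prod (f x) (h x))"
  using assms(3,4)
proof (induction k arbitrary: f h)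
  case 0 thus ?case
    using bounded_bilinear.continuous_on[OF assms(2)] by auto
next
  case (Suc k)
  have d: "f differentiable_on U" and c: "\<And>v. Ck k U (\<lambda>p. frechet_derivative f (at p) v)"
    using Suc.prems by auto
  have d2: "h differentiable_on U" and c2: "\<And>v. Ck k U (\<lambda>p. frechet_derivative h (at p) v)"
    using Suc.prems by auto
  have hd: "((\<lambda>x. prod (f x) (h x)) has_derivative
      (\<lambda>v. prod (f p) (frechet_derivative h (at p) v) + prod (frechet_derivative f (at p) v) (h p))) (at p)"
    if "p \<in> U" for p
    using bounded_bilinear.FDERIV[OF assms(2) fd_works[OF assms(1) that d] fd_works[OF assms(1) that d2]] .
  have "(\<lambda>x. prod (f x) (h x)) differentiable_on U"
    using hd assms(1) differentiable_on_eq_differentiable_at differentiable_def by blast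
  moreover have "Ck k U (\<lambda>p. frechet_derivative (\<lambda>x. prod (f x) (h x)) (at p) v)" for v
  proof -
    have f0: "Ck k U f" "Ck k U h" using Suc.prems Ck_Suc_imp by blast+
    have "Ck k U (\<lambda>p. prod (f p) (frechet_derivative h (at p) v) + prod (frechet_derivative f (at p) v) (h p))"
    proof -
      have a: "Ck k U (\<lambda>p. prod (f p) (frechet_derivative h (at p) v))" using Suc.IH[OF f0(1) c2] .
      have b: "Ck k U (\<lambda>p. prod (frechet_derivative f (at p) v) (h p))" using Suc.IH[OF c f0(2)] .
      show ?thesis using Ck_add[OF assms(1) a b] .
    qed
    note X = this
    show ?thesis
      by (rule Ck_cong[OF assms(1) _ X]) (simp add: fd_eq[OF assms(1) _ hd])
  qed
  ultimately show ?case by simp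
qed

lemma Ck_inverse:
  fixes f :: "'a::real_normed_vector \<Rightarrow> real"
  assumes "open U" "Ck k U f" "\<forall>x\<in>U. f x \<noteq> 0"
  shows "Ck k U (\<lambda>x. inverse (f x))"
  using assms(2,3)
proof (induction k arbitrary: f)
  case 0 thus ?case by (auto intro: continuous_on_inverse)
next
  case (Suc k)
  have d: "f differentiable_on U" and c: "\<And>v. Ck k U (\<lambda>p. frechet_derivative f (at p) v)"
    using Suc.prems by auto
  have hd: "((\<lambda>x. inverse (f x)) has_derivative
      (\<lambda>v. - (inverse (f p) * frechet_derivative f (at p) v * inverse (f p)))) (at p)"
    if "p \<in> U" for p
    using Deriv.has_derivative_inverse[OF _ fd_works[OF assms(1) that d]] Suc.prems(2) that by blast
  have "(\<lambda>x. inverse (f x)) differentiable_on U"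
    using hd assms(1) differentiable_on_eq_differentiable_at differentiable_def by blast
  moreover have "Ck k U (\<lambda>p. frechet_derivative (\<lambda>x. inverse (f x)) (at p) v)" for v
  proof -
    have i: "Ck k U (\<lambda>x. inverse (f x))" using Suc.IH[OF Ck_Suc_imp[OF Suc.prems(1)] Suc.prems(2)] .
    have a: "Ck k U (\<lambda>p. inverse (f p) * frechet_derivative f (at p) v)"
      using Ck_bilin[OF assms(1) bounded_bilinear_mult i c] .
    have b: "Ck k U (\<lambda>p. (inverse (f p) * frechet_derivative f (at p) v) * inverse (f p))"
      using Ck_bilin[OF assms(1) bounded_bilinear_mult a i] .
    have X: "Ck k U (\<lambda>p. - (inverse (f p) * frechet_derivative f (at p) v * inverse (f p)))"
      using Ck_linear[OF assms(1) bounded_linear_minus[OF bounded_linear_ident] b] .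
    show ?thesis
      by (rule Ck_cong[OF assms(1) _ X]) (simp add: fd_eq[OF assms(1) _ hd])
  qed
  ultimately show ?case by simp
qed

definition sm :: "'a::real_normed_vector set \<Rightarrow> ('a \<Rightarrow> 'b::real_normed_vector) \<Rightarrow> bool" where
  "sm U f = smooth_on' U f"

lemma sm_cong: "open U \<Longrightarrow> (\<And>x. x \<in> U \<Longrightarrow> f x = h x) \<Longrightarrow> smooth_on' U f \<Longrightarrow> smooth_on' U h"
  unfolding smooth_on'_def using Ck_cong by blast
lemma sm_const: "open U \<Longrightarrow> smooth_on' U (\<lambda>x. c)"
  unfolding smooth_on'_def using Ck_const by blast
lemma sm_add: "open U \<Longrightarrow> smooth_on' U f \<Longrightarrow> smooth_on' U h \<Longrightarrow> smooth_on' U (\<lambda>x. f x + h x)"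
  unfolding smooth_on'_def using Ck_add by blast
lemma sm_linear: "open U \<Longrightarrow> bounded_linear L \<Longrightarrow> smooth_on' U f \<Longrightarrow> smooth_on' U (\<lambda>x. L (f x))"
  unfolding smooth_on'_def using Ck_linear by blast
lemma sm_bilin:
  fixes prod :: "'b::real_normed_vector \<Rightarrow> 'c::real_normed_vector \<Rightarrow> 'd::real_normed_vector"
    and f :: "'a::real_normed_vector \<Rightarrow> 'b" and h :: "'a \<Rightarrow> 'c"
  shows "open U \<Longrightarrow> bounded_bilinear prod \<Longrightarrow> smooth_on' U f \<Longrightarrow> smooth_on' U h \<Longrightarrow> smooth_on' U (\<lambda>x. prod (f x) (h x))"
  unfolding smooth_on'_def using Ck_bilin by blast
lemma sm_inverse:
  fixes f :: "'a::real_normed_vector \<Rightarrow> real"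
  shows "open U \<Longrightarrow> smooth_on' U f \<Longrightarrow> \<forall>x\<in>U. f x \<noteq> 0 \<Longrightarrow> smooth_on' U (\<lambda>x. inverse (f x))"
  unfolding smooth_on'_def using Ck_inverse by blast
lemma sm_fd: "smooth_on' U f \<Longrightarrow> smooth_on' U (\<lambda>p. frechet_derivative f (at p) v)"
  unfolding smooth_on'_def by (metis Ck.simps(2))
lemma sm_diffble: "smooth_on' U f \<Longrightarrow> f differentiable_on U"
  unfolding smooth_on'_def by (metis Ck.simps(2))

lemma sm_scaleR: "open U \<Longrightarrow> smooth_on' U f \<Longrightarrow> smooth_on' U h \<Longrightarrow> smooth_on' U (\<lambda>x. f x *\<^sub>R h x)"
  using sm_bilin[OF _ bounded_bilinear_scaleR] by blast
lemma sm_mult: "open U \<Longrightarrow> smooth_on' U (f::_\<Rightarrow>real) \<Longrightarrow> smooth_on' U h \<Longrightarrow> smooth_on' U (\<lambda>x. f x * h x)"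
  using sm_bilin[OF _ bounded_bilinear_mult] by blast
lemma sm_inner: "open U \<Longrightarrow> smooth_on' U f \<Longrightarrow> smooth_on' U (\<lambda>x. f x \<bullet> b)"
  using sm_linear[OF _ bounded_linear_inner_left] by blast
lemma sm_uminus: "open U \<Longrightarrow> smooth_on' U f \<Longrightarrow> smooth_on' U (\<lambda>x. - f x)"
  using sm_linear[OF _ bounded_linear_minus[OF bounded_linear_ident]] by blast
lemma sm_diff: "open U \<Longrightarrow> smooth_on' U f \<Longrightarrow> smooth_on' U h \<Longrightarrow> smooth_on' U (\<lambda>x. f x - h x)"
  using sm_add[OF _ _ sm_uminus[of U h]] by simp
lemma sm_cscale: "open U \<Longrightarrow> smooth_on' U f \<Longrightarrow> smooth_on' U (\<lambda>x. c *\<^sub>R f x)"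
  using sm_scaleR[OF _ sm_const] by blast
lemma sm_sum: "open U \<Longrightarrow> (\<And>i. i \<in> S \<Longrightarrow> smooth_on' U (f i)) \<Longrightarrow> smooth_on' U (\<lambda>x. \<Sum>i\<in>S. f i x)"
proof (induction S rule: infinite_finite_induct)
  case (infinite A) thus ?case by (simp add: sm_const)
next
  case empty thus ?case by (simp add: sm_const)
next
  case (insert x F) thus ?case by (simp add: sm_add)
qed




lemma bil_expand:
  fixes B :: "'a::euclidean_space \<Rightarrow> 'a \<Rightarrow> real"
  assumes "bilinear B"
  shows "B x y = (\<Sum>a\<in>Basis. \<Sum>b\<in>Basis. (x \<bullet> a) * (y \<bullet> b) * B a b)"
proof -
  have "B x y = B (\<Sum>a\<in>Basis. (x \<bullet> a) *\<^sub>R a) (\<Sum>b\<in>Basis. (y \<bullet> b) *\<^sub>R b)"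
    by (simp add: euclidean_representation)
  also have "\<dots> = (\<Sum>(a,b)\<in>Basis \<times> Basis. B ((x \<bullet> a) *\<^sub>R a) ((y \<bullet> b) *\<^sub>R b))"
    by (rule bilinear_sum[OF assms])
  also have "\<dots> = (\<Sum>a\<in>Basis. \<Sum>b\<in>Basis. (x \<bullet> a) * (y \<bullet> b) * B a b)"
    by (simp add: sum.cartesian_product bilinear_lmul[OF assms] bilinear_rmul[OF assms] mult_ac)
  finally show ?thesis .
qed

lemma lin_expand:
  fixes L :: "'a::euclidean_space \<Rightarrow> 'b::real_vector"
  assumes "linear L"
  shows "L x = (\<Sum>a\<in>Basis. (x \<bullet> a) *\<^sub>R L a)"
proof -
  have "L x = L (\<Sum>a\<in>Basis. (x \<bullet> a) *\<^sub>R a)" by (simp add: euclidean_representation)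
  also have "\<dots> = (\<Sum>a\<in>Basis. (x \<bullet> a) *\<^sub>R L a)"
    using assms by (simp add: linear_sum linear_scale)
  finally show ?thesis .
qed

locale ctx =
  fixes U :: "'a::euclidean_space set"
    and g :: "'a \<Rightarrow> 'a \<Rightarrow> 'a \<Rightarrow> real"
    and P :: "'a \<Rightarrow> 'a \<Rightarrow> 'a"
    and nabla :: "('a \<Rightarrow> 'a) \<Rightarrow> ('a \<Rightarrow> 'a) \<Rightarrow> ('a \<Rightarrow> 'a)"
  assumes rapm: "rapm U g P" and lc: "is_LC U g nabla" and w1: "is_W1 U g P nabla"
begin

lemma openU: "open U" using rapm by (simp add: rapm_def)
lemma dim4: "DIM('a) = 4" using rapm by (simp add: rapm_def)
lemma gb: "p \<in> U \<Longrightarrow> bilinear (g p)" using rapm by (simp add: rapm_def)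
lemma gs: "p \<in> U \<Longrightarrow> g p u v = g p v u" using rapm by (simp add: rapm_def)
lemma gpos: "p \<in> U \<Longrightarrow> u \<noteq> 0 \<Longrightarrow> g p u u > 0" using rapm by (simp add: rapm_def)
lemma Pl: "p \<in> U \<Longrightarrow> linear (P p)" using rapm by (simp add: rapm_def)
lemma PP[simp]: "p \<in> U \<Longrightarrow> P p (P p u) = u" using rapm by (simp add: rapm_def)
lemma gPP[simp]: "p \<in> U \<Longrightarrow> g p (P p u) (P p v) = g p u v" using rapm by (simp add: rapm_def)
lemma trP: "p \<in> U \<Longrightarrow> (\<Sum>b\<in>Basis. P p b \<bullet> b) = 0" using rapm by (simp add: rapm_def)
lemma sm_g: "smooth_on' U (\<lambda>p. g p u v)" using rapm by (simp add: rapm_def)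
lemma sm_P: "smooth_on' U (\<lambda>p. P p u)" using rapm by (simp add: rapm_def)

lemma g_add1[simp]: "p \<in> U \<Longrightarrow> g p (x + y) z = g p x z + g p y z" using gb bilinear_ladd by blast
lemma g_add2[simp]: "p \<in> U \<Longrightarrow> g p z (x + y) = g p z x + g p z y" using gb bilinear_radd by blast
lemma g_diff1[simp]: "p \<in> U \<Longrightarrow> g p (x - y) z = g p x z - g p y z" using gb bilinear_lsub by blast
lemma g_diff2[simp]: "p \<in> U \<Longrightarrow> g p z (x - y) = g p z x - g p z y" using gb bilinear_rsub by blast
lemma g_neg1[simp]: "p \<in> U \<Longrightarrow> g p (- x) z = - g p x z" using gb bilinear_lneg by blast
lemma g_neg2[simp]: "p \<in> U \<Longrightarrow> g p z (- x) = - g p z x" using gb bilinear_rneg by blast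
lemma g_scale1[simp]: "p \<in> U \<Longrightarrow> g p (c *\<^sub>R x) z = c * g p x z" using gb bilinear_lmul by fastforce
lemma g_scale2[simp]: "p \<in> U \<Longrightarrow> g p z (c *\<^sub>R x) = c * g p z x" using gb bilinear_rmul by fastforce
lemma g_zero1[simp]: "p \<in> U \<Longrightarrow> g p 0 z = 0" using gb bilinear_lzero by blast
lemma g_zero2[simp]: "p \<in> U \<Longrightarrow> g p z 0 = 0" using gb bilinear_rzero by blast
lemma g_sum1: "p \<in> U \<Longrightarrow> g p (\<Sum>i\<in>S. f i) z = (\<Sum>i\<in>S. g p (f i) z)"
  using gb[of p] unfolding bilinear_def by (simp add: linear_sum[where f="\<lambda>x. g p x z"])
lemma g_sum2: "p \<in> U \<Longrightarrow> g p z (\<Sum>i\<in>S. f i) = (\<Sum>i\<in>S. g p z (f i))"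
  using gb[of p] unfolding bilinear_def by (simp add: linear_sum[where f="\<lambda>x. g p z x"])

lemma P_add[simp]: "p \<in> U \<Longrightarrow> P p (x + y) = P p x + P p y" using Pl linear_add by blast
lemma P_diff[simp]: "p \<in> U \<Longrightarrow> P p (x - y) = P p x - P p y" using Pl linear_diff by blast
lemma P_neg[simp]: "p \<in> U \<Longrightarrow> P p (- x) = - P p x" using Pl linear_neg by blast
lemma P_scale[simp]: "p \<in> U \<Longrightarrow> P p (c *\<^sub>R x) = c *\<^sub>R P p x" using Pl linear_scale by blast
lemma P_zero[simp]: "p \<in> U \<Longrightarrow> P p 0 = 0" using Pl linear_0 by blast
lemma P_sum: "p \<in> U \<Longrightarrow> P p (\<Sum>i\<in>S. f i) = (\<Sum>i\<in>S. P p (f i))" using Pl linear_sum by blast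

lemma gP1: "p \<in> U \<Longrightarrow> g p (P p x) y = g p x (P p y)"
  using gPP[of p x "P p y"] by simp

lemma g_nondeg: "p \<in> U \<Longrightarrow> (\<And>w. g p u w = g p v w) \<Longrightarrow> u = v"
proof (rule ccontr)
  assume p: "p \<in> U" and h: "\<And>w. g p u w = g p v w" and "u \<noteq> v"
  hence "g p (u - v) (u - v) > 0" using gpos[OF p, of "u - v"] by simp
  moreover have "g p (u - v) (u - v) = 0" using h[of "u - v"] p by simp
  ultimately show False by linarith
qed

lemma vf_iff: "X \<in> vf U \<longleftrightarrow> smooth_on' U X" by (simp add: vf_def)
lemma vf_cf[simp]: "cf u \<in> vf U" by (simp add: vf_def cf_def sm_const openU)
lemma vf_add: "X \<in> vf U \<Longrightarrow> Y \<in> vf U \<Longrightarrow> (\<lambda>q. X q + Y q) \<in> vf U"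
  by (simp add: vf_def sm_add openU)
lemma vf_diff: "X \<in> vf U \<Longrightarrow> Y \<in> vf U \<Longrightarrow> (\<lambda>q. X q - Y q) \<in> vf U"
  by (simp add: vf_def sm_diff openU)
lemma vf_scale: "smooth_on' U f \<Longrightarrow> Y \<in> vf U \<Longrightarrow> (\<lambda>q. f q *\<^sub>R Y q) \<in> vf U"
  by (simp add: vf_def sm_scaleR openU)
lemma vf_sum: "(\<And>i. i \<in> S \<Longrightarrow> X i \<in> vf U) \<Longrightarrow> (\<lambda>q. \<Sum>i\<in>S. X i q) \<in> vf U"
  by (simp add: vf_def sm_sum openU)
lemma vf_cong: "X \<in> vf U \<Longrightarrow> (\<And>q. q \<in> U \<Longrightarrow> X q = Y q) \<Longrightarrow> Y \<in> vf U"
  using sm_cong[OF openU] by (simp add: vf_def) blast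
lemma sm_comp: "X \<in> vf U \<Longrightarrow> smooth_on' U (\<lambda>q. X q \<bullet> b)"
  by (simp add: vf_def sm_inner openU)

lemma vf_repr: "X = (\<lambda>q. \<Sum>b\<in>Basis. (X q \<bullet> b) *\<^sub>R cf b q)"
  by (simp add: cf_def euclidean_representation)

lemma sm_gF: assumes "X \<in> vf U" "Y \<in> vf U" shows "smooth_on' U (gF g X Y)"
proof -
  have "smooth_on' U (\<lambda>q. \<Sum>a\<in>Basis. \<Sum>b\<in>Basis. (X q \<bullet> a) * (Y q \<bullet> b) * g q a b)"
    by (intro sm_sum sm_mult sm_comp assms openU sm_g)
  thus ?thesis
    by (rule sm_cong[OF openU, rotated]) (simp add: gF_def bil_expand[OF gb, symmetric])
qed

lemma vf_PF: assumes "X \<in> vf U" shows "PF P X \<in> vf U"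
proof -
  have "(\<lambda>q. \<Sum>a\<in>Basis. (X q \<bullet> a) *\<^sub>R P q a) \<in> vf U"
    by (intro vf_sum vf_scale sm_comp assms) (simp add: vf_def sm_P)
  thus ?thesis
    by (rule vf_cong) (simp add: PF_def lin_expand[OF Pl, symmetric])
qed

lemma fd_lin: "smooth_on' U f \<Longrightarrow> p \<in> U \<Longrightarrow> linear (frechet_derivative f (at p))"
  using sm_diffble openU differentiable_on_eq_differentiable_at linear_frechet_derivative by blast

lemma fdw: "smooth_on' U f \<Longrightarrow> p \<in> U \<Longrightarrow> (f has_derivative frechet_derivative f (at p)) (at p)"
  using sm_diffble fd_works openU by blast

lemma sm_ddir:
  fixes f :: "'a \<Rightarrow> 'b::real_normed_vector"
  assumes "X \<in> vf U" "smooth_on' U f" shows "smooth_on' U (ddir X f)"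
proof -
  have "smooth_on' U (\<lambda>q. \<Sum>a\<in>Basis. (X q \<bullet> a) *\<^sub>R frechet_derivative f (at q) a)"
    by (intro sm_sum sm_scaleR sm_comp assms openU sm_fd)
  thus ?thesis
    by (rule sm_cong[OF openU, rotated]) (simp add: ddir_def lin_expand[OF fd_lin[OF assms(2)], symmetric])
qed

lemma vf_lie: "X \<in> vf U \<Longrightarrow> Y \<in> vf U \<Longrightarrow> lie X Y \<in> vf U"
  unfolding lie_def vf_iff by (intro sm_diff[OF openU] sm_ddir) (auto simp: vf_iff)

lemma ddir_cong: "smooth_on' U f \<Longrightarrow> p \<in> U \<Longrightarrow> (\<And>q. q \<in> U \<Longrightarrow> f q = h q) \<Longrightarrow> ddir X f p = ddir X h p"
  unfolding ddir_def using frechet_derivative_transform_within_open[of f p U h] openU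
    sm_diffble differentiable_on_eq_differentiable_at by metis

lemma ddir_add: "smooth_on' U f \<Longrightarrow> smooth_on' U h \<Longrightarrow> p \<in> U \<Longrightarrow> ddir X (\<lambda>q. f q + h q) p = ddir X f p + ddir X h p"
proof -
  assume a: "smooth_on' U f" "smooth_on' U h" "p \<in> U"
  have "frechet_derivative (\<lambda>q. f q + h q) (at p) = (\<lambda>v. frechet_derivative f (at p) v + frechet_derivative h (at p) v)"
    by (rule fd_eq[OF openU a(3) has_derivative_add[OF fdw[OF a(1,3)] fdw[OF a(2,3)]]])
  thus ?thesis by (simp add: ddir_def)
qed

lemma ddir_scale:
  fixes f :: "'a \<Rightarrow> real"
  shows "smooth_on' U f \<Longrightarrow> smooth_on' U h \<Longrightarrow> p \<in> U \<Longrightarrow>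
    ddir X (\<lambda>q. f q *\<^sub>R h q) p = ddir X f p *\<^sub>R h p + f p *\<^sub>R ddir X h p"
proof -
  assume a: "smooth_on' U f" "smooth_on' U h" "p \<in> U"
  have "frechet_derivative (\<lambda>q. f q *\<^sub>R h q) (at p) = (\<lambda>v. f p *\<^sub>R frechet_derivative h (at p) v + frechet_derivative f (at p) v *\<^sub>R h p)"
    by (rule fd_eq[OF openU a(3) has_derivative_scaleR[OF fdw[OF a(1,3)] fdw[OF a(2,3)]]])
  thus ?thesis by (simp add: ddir_def)
qed

lemma ddir_mult:
  fixes f :: "'a \<Rightarrow> real"
  shows "smooth_on' U f \<Longrightarrow> smooth_on' U h \<Longrightarrow> p \<in> U \<Longrightarrow>
    ddir X (\<lambda>q. f q * h q) p = ddir X f p * h p + f p * ddir X h p"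
  using ddir_scale[of f h p X] by simp

lemma ddir_const[simp]: "ddir X (\<lambda>q. c) p = 0"
  by (simp add: ddir_def)

lemma ddir_dir_add: "smooth_on' U f \<Longrightarrow> p \<in> U \<Longrightarrow> ddir (\<lambda>q. X q + Y q) f p = ddir X f p + ddir Y f p"
  unfolding ddir_def using fd_lin linear_add by blast

lemma ddir_dir_scale: "smooth_on' U f \<Longrightarrow> p \<in> U \<Longrightarrow> ddir (\<lambda>q. c q *\<^sub>R X q) f p = c p *\<^sub>R ddir X f p"
  unfolding ddir_def using fd_lin linear_scale by blast

lemma lie_dir_add: "X \<in> vf U \<Longrightarrow> Y \<in> vf U \<Longrightarrow> Z \<in> vf U \<Longrightarrow> p \<in> U \<Longrightarrow>
   lie (\<lambda>q. X q + Y q) Z p = lie X Z p + lie Y Z p"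
  unfolding lie_def using ddir_dir_add[of Z p X Y] ddir_add[of X Y p Z] by (simp add: vf_iff)

lemma lie_scale: "smooth_on' U f \<Longrightarrow> X \<in> vf U \<Longrightarrow> Y \<in> vf U \<Longrightarrow> p \<in> U \<Longrightarrow>
   lie (\<lambda>q. f q *\<^sub>R X q) Y p = f p *\<^sub>R lie X Y p - ddir Y f p *\<^sub>R X p"
  unfolding lie_def using ddir_dir_scale[of Y p f X] ddir_scale[of f X p Y]
  by (simp add: vf_iff algebra_simps)

lemma lie_anti: "lie X Y p = - lie Y X p" by (simp add: lie_def)

end



context ctx begin

lemma nab_vf: "X \<in> vf U \<Longrightarrow> Y \<in> vf U \<Longrightarrow> nabla X Y \<in> vf U"
  using lc by (simp add: is_LC_def)

lemma lc_ax: assumes "X \<in> vf U" "Y \<in> vf U" "Z \<in> vf U" "smooth_on' U f" "p \<in> U"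
  shows "nabla (\<lambda>q. X q + Y q) Z p = nabla X Z p + nabla Y Z p \<and>
        nabla (\<lambda>q. f q *\<^sub>R X q) Z p = f p *\<^sub>R nabla X Z p \<and>
        nabla X (\<lambda>q. Y q + Z q) p = nabla X Y p + nabla X Z p \<and>
        nabla X (\<lambda>q. f q *\<^sub>R Y q) p = ddir X f p *\<^sub>R Y p + f p *\<^sub>R nabla X Y p \<and>
        nabla X Y p - nabla Y X p = lie X Y p \<and>
        ddir X (gF g Y Z) p = gF g (nabla X Y) Z p + gF g Y (nabla X Z) p"
  using lc assms unfolding is_LC_def by blast

lemma sm0: "smooth_on' U (\<lambda>q. c)" by (rule sm_const[OF openU])

lemma nab_add1: "X \<in> vf U \<Longrightarrow> Y \<in> vf U \<Longrightarrow> Z \<in> vf U \<Longrightarrow> p \<in> U \<Longrightarrow>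
  nabla (\<lambda>q. X q + Y q) Z p = nabla X Z p + nabla Y Z p"
  using lc_ax[OF _ _ _ sm0] by blast
lemma nab_scale1: "X \<in> vf U \<Longrightarrow> Z \<in> vf U \<Longrightarrow> smooth_on' U f \<Longrightarrow> p \<in> U \<Longrightarrow>
  nabla (\<lambda>q. f q *\<^sub>R X q) Z p = f p *\<^sub>R nabla X Z p"
  using lc_ax[of X X Z f p] by blast
lemma nab_add2: "X \<in> vf U \<Longrightarrow> Y \<in> vf U \<Longrightarrow> Z \<in> vf U \<Longrightarrow> p \<in> U \<Longrightarrow>
  nabla X (\<lambda>q. Y q + Z q) p = nabla X Y p + nabla X Z p"
  using lc_ax[OF _ _ _ sm0] by blast
lemma nab_scale2: "X \<in> vf U \<Longrightarrow> Y \<in> vf U \<Longrightarrow> smooth_on' U f \<Longrightarrow> p \<in> U \<Longrightarrow>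
  nabla X (\<lambda>q. f q *\<^sub>R Y q) p = ddir X f p *\<^sub>R Y p + f p *\<^sub>R nabla X Y p"
  using lc_ax[of X Y Y f p] by blast
lemma nab_tors: "X \<in> vf U \<Longrightarrow> Y \<in> vf U \<Longrightarrow> p \<in> U \<Longrightarrow>
  nabla X Y p - nabla Y X p = lie X Y p"
  using lc_ax[OF _ _ _ sm0] by blast
lemma nab_metric: "X \<in> vf U \<Longrightarrow> Y \<in> vf U \<Longrightarrow> Z \<in> vf U \<Longrightarrow> p \<in> U \<Longrightarrow>
  ddir X (gF g Y Z) p = g p (nabla X Y p) (Z p) + g p (Y p) (nabla X Z p)"
  using lc_ax[OF _ _ _ sm0] by (simp add: gF_def)

definition ind :: "'a \<Rightarrow> real" where "ind q = (if q \<in> U then 0 else 1)"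
lemma sm_ind: "smooth_on' U ind"
  by (rule sm_cong[OF openU _ sm0[of 0]]) (simp add: ind_def)

lemma nab_loc1: assumes "X \<in> vf U" "X' \<in> vf U" "Z \<in> vf U" "p \<in> U" "\<And>q. q \<in> U \<Longrightarrow> X q = X' q"
  shows "nabla X Z p = nabla X' Z p"
proof -
  define D where "D = (\<lambda>q. X q - X' q)"
  have D: "D \<in> vf U" using vf_diff assms by (simp add: D_def)
  have XD: "X = (\<lambda>q. X' q + D q)" by (simp add: D_def)
  have DD: "D = (\<lambda>q. ind q *\<^sub>R D q)" using assms(5) by (auto simp: D_def ind_def)
  have "nabla D Z p = nabla (\<lambda>q. ind q *\<^sub>R D q) Z p"
    using DD by (rule arg_cong[where f="\<lambda>x. nabla x Z p"])
  also have "\<dots> = 0"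
    using nab_scale1[OF D assms(3) sm_ind assms(4)] assms(4) by (simp add: ind_def)
  finally have "nabla D Z p = 0" .
  thus ?thesis using nab_add1[OF assms(2) D assms(3,4)] XD by simp
qed

lemma nab_loc2: assumes "X \<in> vf U" "Y \<in> vf U" "Y' \<in> vf U" "p \<in> U" "\<And>q. q \<in> U \<Longrightarrow> Y q = Y' q"
  shows "nabla X Y p = nabla X Y' p"
proof -
  define D where "D = (\<lambda>q. Y q - Y' q)"
  have D: "D \<in> vf U" using vf_diff assms by (simp add: D_def)
  have XD: "Y = (\<lambda>q. Y' q + D q)" by (simp add: D_def)
  have DD: "D = (\<lambda>q. ind q *\<^sub>R D q)" using assms(5) by (auto simp: D_def ind_def)
  have "nabla X D p = nabla X (\<lambda>q. ind q *\<^sub>R D q) p"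
    using DD by (rule arg_cong[where f="\<lambda>x. nabla X x p"])
  also have "\<dots> = 0"
    using nab_scale2[OF assms(1) D sm_ind assms(4)] assms(4,5) by (simp add: ind_def D_def)
  finally have "nabla X D p = 0" .
  thus ?thesis using nab_add2[OF assms(1) assms(3) D assms(4)] XD by simp
qed

lemma nab_sum1: assumes "finite S" "\<And>i. i \<in> S \<Longrightarrow> X i \<in> vf U" "Z \<in> vf U" "p \<in> U"
  shows "nabla (\<lambda>q. \<Sum>i\<in>S. X i q) Z p = (\<Sum>i\<in>S. nabla (X i) Z p)"
  using assms(1,2)
proof (induction S rule: finite_induct)
  case empty
  have "nabla (\<lambda>q. (\<lambda>q. 0::real) q *\<^sub>R Z q) Z p = (\<lambda>q. 0::real) p *\<^sub>R nabla Z Z p"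
    by (rule nab_scale1[OF assms(3) assms(3) sm0 assms(4)])
  thus ?case by simp
next
  case (insert x F)
  have "nabla (\<lambda>q. \<Sum>i\<in>insert x F. X i q) Z p = nabla (\<lambda>q. X x q + (\<Sum>i\<in>F. X i q)) Z p"
    using insert by simp
  also have "\<dots> = nabla (X x) Z p + nabla (\<lambda>q. \<Sum>i\<in>F. X i q) Z p"
    by (rule nab_add1) (use insert assms vf_sum[of F X] in auto)
  finally show ?case using insert by simp
qed

lemma T1: assumes "X \<in> vf U" "Z \<in> vf U" "p \<in> U"
  shows "nabla X Z p = (\<Sum>b\<in>Basis. (X p \<bullet> b) *\<^sub>R nabla (cf b) Z p)"
proof -
  have "nabla X Z p = nabla (\<lambda>q. \<Sum>b\<in>Basis. (X q \<bullet> b) *\<^sub>R cf b q) Z p"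
    using vf_repr[of X] by simp
  also have "\<dots> = (\<Sum>b\<in>Basis. nabla (\<lambda>q. (X q \<bullet> b) *\<^sub>R cf b q) Z p)"
    by (rule nab_sum1) (auto intro: vf_scale[OF sm_comp[OF assms(1)] vf_cf] assms)
  also have "\<dots> = (\<Sum>b\<in>Basis. (X p \<bullet> b) *\<^sub>R nabla (cf b) Z p)"
    by (rule sum.cong) (auto intro!: nab_scale1 sm_comp assms)
  finally show ?thesis .
qed

definition Tv :: "'a \<Rightarrow> 'a" where
  "Tv p = (\<Sum>i\<in>Basis. \<Sum>j\<in>Basis. ginv g p i j *\<^sub>R (nabla (cf i) (PF P (cf j)) p - P p (nabla (cf i) (cf j) p)))"

lemma theta_T: "p \<in> U \<Longrightarrow> theta g P nabla Z p = g p (Tv p) (Z p)"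
  by (simp add: theta_def Tv_def Ften_def gF_def g_sum1)

lemma Omega_T: assumes "p \<in> U" shows "Omega g P nabla p = Tv p"
proof -
  have "(THE v. \<forall>u. g p v u = theta g P nabla (cf u) p) = Tv p"
  proof (rule the_equality)
    show "\<forall>u. g p (Tv p) u = theta g P nabla (cf u) p" using theta_T[OF assms] by (simp add: cf_def)
    fix v assume "\<forall>u. g p v u = theta g P nabla (cf u) p"
    thus "v = Tv p" using theta_T[OF assms] g_nondeg[OF assms] by (simp add: cf_def)
  qed
  thus ?thesis by (simp add: Omega_def)
qed

abbreviation "Om \<equiv> Omega g P nabla"
abbreviation "th \<equiv> theta g P nabla"

lemma theta_Om: "p \<in> U \<Longrightarrow> th Z p = g p (Om p) (Z p)"
  by (simp add: theta_T Omega_T)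

definition Wv :: "'a \<Rightarrow> 'a \<Rightarrow> 'a \<Rightarrow> 'a" where
  "Wv p x y = (1/4) *\<^sub>R (g p x y *\<^sub>R Om p - g p x (P p y) *\<^sub>R P p (Om p)
      + g p (Om p) y *\<^sub>R x - g p (Om p) (P p y) *\<^sub>R P p x)"

lemma W1v: assumes "X \<in> vf U" "Y \<in> vf U" "p \<in> U"
  shows "nabla X (PF P Y) p - P p (nabla X Y p) = Wv p (X p) (Y p)"
proof (rule g_nondeg[OF assms(3)])
  fix w
  have "Ften g P nabla X Y (cf w) p = (1/4) *
       (gF g X Y p * th (cf w) p - gF g X (PF P Y) p * th (PF P (cf w)) p
        + gF g X (cf w) p * th Y p - gF g X (PF P (cf w)) p * th (PF P Y) p)"
    using w1 assms by (simp add: is_W1_def)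
  hence e: "g p (nabla X (PF P Y) p - P p (nabla X Y p)) w = (1/4) * (g p (X p) (Y p) * g p (Om p) w
     - g p (X p) (P p (Y p)) * g p (Om p) (P p w) + g p (X p) w * g p (Om p) (Y p)
     - g p (X p) (P p w) * g p (Om p) (P p (Y p)))"
    using assms(3) by (simp only: Ften_def gF_def theta_Om PF_def cf_def)
  have r: "g p (Wv p (X p) (Y p)) w = (1/4) * (g p (X p) (Y p) * g p (Om p) w
     - g p (X p) (P p (Y p)) * g p (P p (Om p)) w + g p (Om p) (Y p) * g p (X p) w
     - g p (Om p) (P p (Y p)) * g p (P p (X p)) w)"
    using assms(3) by (simp add: Wv_def algebra_simps)
  show "g p (nabla X (PF P Y) p - P p (nabla X Y p)) w = g p (Wv p (X p) (Y p)) w"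
    unfolding e r using assms(3) by (simp add: gP1 algebra_simps)
qed

end



context ctx begin

lemma Wv_minus: assumes "p \<in> U" "P p x = - x"
  shows "Wv p x x = (1/4 * g p x x) *\<^sub>R (Om p + P p (Om p))"
proof -
  have a: "g p x (P p x) = - g p x x" "g p (Om p) (P p x) = - g p (Om p) x" using assms by simp_all
  show ?thesis unfolding Wv_def a assms(2) using assms(1) by (simp add: algebra_simps)
qed

lemma Wv_plus: assumes "p \<in> U" "P p x = x"
  shows "Wv p x x = (1/4 * g p x x) *\<^sub>R (Om p - P p (Om p))"
proof -
  have a: "g p x (P p x) = g p x x" "g p (Om p) (P p x) = g p (Om p) x" using assms by simp_all
  show ?thesis unfolding Wv_def a assms(2) using assms(1) by (simp add: algebra_simps)
qed

lemma g_nonneg: "p \<in> U \<Longrightarrow> g p u u \<ge> 0"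
  using gpos[of p u] by (cases "u = 0") auto

lemma g_zero_iff: "p \<in> U \<Longrightarrow> g p u u = 0 \<longleftrightarrow> u = 0"
  using gpos[of p u] by (cases "u = 0") auto

lemma Om_vf: "Om \<in> vf U"
proof -
  define Em where "Em b = (\<lambda>q. cf b q - PF P (cf b) q)" for b
  define Ep where "Ep b = (\<lambda>q. cf b q + PF P (cf b) q)" for b
  have Emv: "Em b \<in> vf U" for b unfolding Em_def by (intro vf_diff vf_PF vf_cf)
  have Epv: "Ep b \<in> vf U" for b unfolding Ep_def by (intro vf_add vf_PF vf_cf)
  define Vm where "Vm b = (\<lambda>q. nabla (Em b) (PF P (Em b)) q - PF P (nabla (Em b) (Em b)) q)" for b
  define Vp where "Vp b = (\<lambda>q. nabla (Ep b) (PF P (Ep b)) q - PF P (nabla (Ep b) (Ep b)) q)" for b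
  have Vmv: "Vm b \<in> vf U" for b unfolding Vm_def by (intro vf_diff vf_PF nab_vf Emv)
  have Vpv: "Vp b \<in> vf U" for b unfolding Vp_def by (intro vf_diff vf_PF nab_vf Epv)
  define sm where "sm q = (\<Sum>b\<in>Basis. gF g (Em b) (Em b) q)" for q
  define sp where "sp q = (\<Sum>b\<in>Basis. gF g (Ep b) (Ep b) q)" for q
  have smm: "smooth_on' U sm" unfolding sm_def by (intro sm_sum openU sm_gF Emv)
  have spm: "smooth_on' U sp" unfolding sp_def by (intro sm_sum openU sm_gF Epv)
  have Vm_eq: "Vm b q = (1/4 * gF g (Em b) (Em b) q) *\<^sub>R (Om q + P q (Om q))" if "q \<in> U" for b q
  proof -
    have e: "Em b q = b - P q b" by (simp add: Em_def PF_def cf_def)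
    have pe: "P q (Em b q) = - Em b q" unfolding e using that by simp
    have "Vm b q = Wv q (Em b q) (Em b q)" using W1v[OF Emv Emv that] by (simp add: Vm_def PF_def)
    also have "\<dots> = (1/4 * gF g (Em b) (Em b) q) *\<^sub>R (Om q + P q (Om q))"
      using Wv_minus[OF that pe] by (simp add: gF_def)
    finally show ?thesis .
  qed
  have Vp_eq: "Vp b q = (1/4 * gF g (Ep b) (Ep b) q) *\<^sub>R (Om q - P q (Om q))" if "q \<in> U" for b q
  proof -
    have e: "Ep b q = b + P q b" by (simp add: Ep_def PF_def cf_def)
    have pe: "P q (Ep b q) = Ep b q" unfolding e using that by simp
    have "Vp b q = Wv q (Ep b q) (Ep b q)" using W1v[OF Epv Epv that] by (simp add: Vp_def PF_def)
    also have "\<dots> = (1/4 * gF g (Ep b) (Ep b) q) *\<^sub>R (Om q - P q (Om q))"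
      using Wv_plus[OF that pe] by (simp add: gF_def)
    finally show ?thesis .
  qed
  have sm_pos: "sm q \<noteq> 0" if q: "q \<in> U" for q
  proof
    assume "sm q = 0"
    hence "\<forall>b\<in>Basis. gF g (Em b) (Em b) q = 0"
      unfolding sm_def by (subst (asm) sum_nonneg_eq_0_iff) (auto simp: gF_def g_nonneg[OF q])
    hence "\<forall>b\<in>Basis. P q b = b" using g_zero_iff[OF q] by (simp add: gF_def Em_def PF_def cf_def)
    hence "(\<Sum>b\<in>Basis. P q b \<bullet> b) = (\<Sum>b\<in>(Basis::'a set). (1::real))" by (auto intro: sum.cong)
    thus False using trP[OF q] dim4 by simp
  qed
  have sp_pos: "sp q \<noteq> 0" if q: "q \<in> U" for q
  proof
    assume "sp q = 0"
    hence "\<forall>b\<in>Basis. gF g (Ep b) (Ep b) q = 0"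
      unfolding sp_def by (subst (asm) sum_nonneg_eq_0_iff) (auto simp: gF_def g_nonneg[OF q])
    hence "\<forall>b\<in>Basis. b + P q b = 0" using g_zero_iff[OF q]
      by (simp add: gF_def Ep_def PF_def cf_def)
    hence "\<forall>b\<in>Basis. P q b = - b" by (metis add.commute eq_neg_iff_add_eq_0)
    hence "(\<Sum>b\<in>Basis. P q b \<bullet> b) = (\<Sum>b\<in>(Basis::'a set). (-1::real))" by (auto intro: sum.cong)
    thus False using trP[OF q] dim4 by simp
  qed
  define F where "F q = (2 * inverse (sm q)) *\<^sub>R (\<Sum>b\<in>Basis. Vm b q) + (2 * inverse (sp q)) *\<^sub>R (\<Sum>b\<in>Basis. Vp b q)" for q
  have Fv: "F \<in> vf U" unfolding F_def
    by (intro vf_add vf_scale sm_mult sm0 sm_inverse openU smm spm sm_pos sp_pos vf_sum Vmv Vpv ballI)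
  show ?thesis
  proof (rule vf_cong[OF Fv])
    fix q assume q: "q \<in> U"
    have "(\<Sum>b\<in>Basis. Vm b q) = (1/4 * sm q) *\<^sub>R (Om q + P q (Om q))"
      by (simp add: Vm_eq[OF q] sm_def scaleR_sum_left sum_divide_distrib)
    moreover have "(\<Sum>b\<in>Basis. Vp b q) = (1/4 * sp q) *\<^sub>R (Om q - P q (Om q))"
      by (simp add: Vp_eq[OF q] sp_def scaleR_sum_left sum_divide_distrib)
    ultimately have "F q = (2 * inverse (sm q) * (1/4 * sm q)) *\<^sub>R (Om q + P q (Om q))
       + (2 * inverse (sp q) * (1/4 * sp q)) *\<^sub>R (Om q - P q (Om q))"
      by (simp add: F_def)
    also have "\<dots> = (1/2) *\<^sub>R (Om q + P q (Om q)) + (1/2) *\<^sub>R (Om q - P q (Om q))"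
      using sm_pos[OF q] sp_pos[OF q] by simp
    also have "\<dots> = Om q" by (simp add: scaleR_add_right scaleR_diff_right flip: scaleR_add_left)
    finally show "F q = Om q" .
  qed
qed

lemma sm_th: "Z \<in> vf U \<Longrightarrow> smooth_on' U (th Z)"
  by (rule sm_cong[OF openU _ sm_gF[OF Om_vf]]) (simp_all add: gF_def theta_Om)

abbreviation "Dt \<equiv> Dtil g P nabla"

definition Qv :: "'a \<Rightarrow> 'a \<Rightarrow> 'a \<Rightarrow> 'a" where
  "Qv p y z = (1/4) *\<^sub>R (g p (Om p) z *\<^sub>R P p y - g p y (P p z) *\<^sub>R Om p)"

lemma Qv_add1[simp]: "p \<in> U \<Longrightarrow> Qv p (x + y) z = Qv p x z + Qv p y z"
  by (simp add: Qv_def algebra_simps)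
lemma Qv_add2[simp]: "p \<in> U \<Longrightarrow> Qv p z (x + y) = Qv p z x + Qv p z y"
  by (simp add: Qv_def algebra_simps)
lemma Qv_diff1[simp]: "p \<in> U \<Longrightarrow> Qv p (x - y) z = Qv p x z - Qv p y z"
  by (simp add: Qv_def algebra_simps)
lemma Qv_diff2[simp]: "p \<in> U \<Longrightarrow> Qv p z (x - y) = Qv p z x - Qv p z y"
  by (simp add: Qv_def algebra_simps)
lemma Qv_scale1[simp]: "p \<in> U \<Longrightarrow> Qv p (c *\<^sub>R x) z = c *\<^sub>R Qv p x z"
  by (simp add: Qv_def algebra_simps)
lemma Qv_scale2[simp]: "p \<in> U \<Longrightarrow> Qv p z (c *\<^sub>R x) = c *\<^sub>R Qv p z x"
  by (simp add: Qv_def algebra_simps)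

lemma Dt_eq: "p \<in> U \<Longrightarrow> Dt Y Z p = nabla Y Z p + Qv p (Y p) (Z p)"
  by (simp add: Dtil_def Qv_def theta_Om)

lemma Dt_fun: "Dt Y Z = (\<lambda>q. nabla Y Z q + ((\<lambda>q. 1/4 * th Z q) q *\<^sub>R PF P Y q
      + (\<lambda>q. -1/4 * gF g Y (PF P Z) q) q *\<^sub>R Om q))"
  by (rule ext) (simp add: Dtil_def PF_def gF_def algebra_simps)

lemma Dt_vf: assumes "Y \<in> vf U" "Z \<in> vf U" shows "Dt Y Z \<in> vf U"
  unfolding Dt_fun
  by (intro vf_add vf_scale nab_vf assms sm_mult sm0 sm_th sm_gF vf_PF Om_vf openU)

lemma Dt_add1: "X \<in> vf U \<Longrightarrow> Y \<in> vf U \<Longrightarrow> Z \<in> vf U \<Longrightarrow> p \<in> U \<Longrightarrow>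
  Dt (\<lambda>q. X q + Y q) Z p = Dt X Z p + Dt Y Z p"
  by (simp add: Dt_eq nab_add1)
lemma Dt_scale1: "X \<in> vf U \<Longrightarrow> Z \<in> vf U \<Longrightarrow> smooth_on' U f \<Longrightarrow> p \<in> U \<Longrightarrow>
  Dt (\<lambda>q. f q *\<^sub>R X q) Z p = f p *\<^sub>R Dt X Z p"
  by (simp add: Dt_eq nab_scale1 scaleR_add_right)
lemma Dt_add2: "X \<in> vf U \<Longrightarrow> Y \<in> vf U \<Longrightarrow> Z \<in> vf U \<Longrightarrow> p \<in> U \<Longrightarrow>
  Dt X (\<lambda>q. Y q + Z q) p = Dt X Y p + Dt X Z p"
  by (simp add: Dt_eq nab_add2)
lemma Dt_scale2: "X \<in> vf U \<Longrightarrow> Y \<in> vf U \<Longrightarrow> smooth_on' U f \<Longrightarrow> p \<in> U \<Longrightarrow>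
  Dt X (\<lambda>q. f q *\<^sub>R Y q) p = ddir X f p *\<^sub>R Y p + f p *\<^sub>R Dt X Y p"
  by (simp add: Dt_eq nab_scale2 scaleR_add_right)
lemma Dt_loc1: "X \<in> vf U \<Longrightarrow> X' \<in> vf U \<Longrightarrow> Z \<in> vf U \<Longrightarrow> p \<in> U \<Longrightarrow> (\<And>q. q \<in> U \<Longrightarrow> X q = X' q) \<Longrightarrow>
  Dt X Z p = Dt X' Z p"
  by (simp add: Dt_eq nab_loc1[of X X' Z p])
lemma Dt_loc2: "X \<in> vf U \<Longrightarrow> Y \<in> vf U \<Longrightarrow> Y' \<in> vf U \<Longrightarrow> p \<in> U \<Longrightarrow> (\<And>q. q \<in> U \<Longrightarrow> Y q = Y' q) \<Longrightarrow>
  Dt X Y p = Dt X Y' p"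
  by (simp add: Dt_eq nab_loc2[of X Y Y' p])

end



context ctx begin

lemma curv_scale1: assumes X: "X \<in> vf U" and Y: "Y \<in> vf U" and Z: "Z \<in> vf U"
  and f: "smooth_on' U f" and p: "p \<in> U"
  shows "curv Dt (\<lambda>q. f q *\<^sub>R X q) Y Z p = f p *\<^sub>R curv Dt X Y Z p"
proof -
  have fX: "(\<lambda>q. f q *\<^sub>R X q) \<in> vf U" by (rule vf_scale[OF f X])
  have A: "Dt (\<lambda>q. f q *\<^sub>R X q) (Dt Y Z) p = f p *\<^sub>R Dt X (Dt Y Z) p"
    by (rule Dt_scale1[OF X Dt_vf[OF Y Z] f p])
  have "Dt Y (Dt (\<lambda>q. f q *\<^sub>R X q) Z) p = Dt Y (\<lambda>q. f q *\<^sub>R Dt X Z q) p"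
    by (rule Dt_loc2[OF Y Dt_vf[OF fX Z] vf_scale[OF f Dt_vf[OF X Z]] p]) (simp add: Dt_scale1[OF X Z f])
  also have "\<dots> = ddir Y f p *\<^sub>R Dt X Z p + f p *\<^sub>R Dt Y (Dt X Z) p"
    by (rule Dt_scale2[OF Y Dt_vf[OF X Z] f p])
  finally have B: "Dt Y (Dt (\<lambda>q. f q *\<^sub>R X q) Z) p = ddir Y f p *\<^sub>R Dt X Z p + f p *\<^sub>R Dt Y (Dt X Z) p" .
  have sf: "smooth_on' U (\<lambda>q. - ddir Y f q)" by (intro sm_uminus openU sm_ddir Y f)
  have L1: "(\<lambda>q. f q *\<^sub>R lie X Y q) \<in> vf U" by (intro vf_scale f vf_lie X Y)
  have L2: "(\<lambda>q. (- ddir Y f q) *\<^sub>R X q) \<in> vf U" by (intro vf_scale sf X)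
  have "Dt (lie (\<lambda>q. f q *\<^sub>R X q) Y) Z p = Dt (\<lambda>q. f q *\<^sub>R lie X Y q + (- ddir Y f q) *\<^sub>R X q) Z p"
    by (rule Dt_loc1[OF vf_lie[OF fX Y] vf_add[OF L1 L2] Z p]) (simp add: lie_scale[OF f X Y])
  also have "\<dots> = f p *\<^sub>R Dt (lie X Y) Z p + (- ddir Y f p) *\<^sub>R Dt X Z p"
    using Dt_add1[OF L1 L2 Z p] Dt_scale1[OF vf_lie[OF X Y] Z f p] Dt_scale1[OF X Z sf p] by simp
  finally have C: "Dt (lie (\<lambda>q. f q *\<^sub>R X q) Y) Z p = f p *\<^sub>R Dt (lie X Y) Z p + (- ddir Y f p) *\<^sub>R Dt X Z p" .
  show ?thesis unfolding curv_def A B C by (simp add: algebra_simps)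
qed

lemma curv_add1: assumes X1: "X1 \<in> vf U" and X2: "X2 \<in> vf U" and Y: "Y \<in> vf U" and Z: "Z \<in> vf U"
  and p: "p \<in> U"
  shows "curv Dt (\<lambda>q. X1 q + X2 q) Y Z p = curv Dt X1 Y Z p + curv Dt X2 Y Z p"
proof -
  have X: "(\<lambda>q. X1 q + X2 q) \<in> vf U" by (rule vf_add[OF X1 X2])
  have A: "Dt (\<lambda>q. X1 q + X2 q) (Dt Y Z) p = Dt X1 (Dt Y Z) p + Dt X2 (Dt Y Z) p"
    by (rule Dt_add1[OF X1 X2 Dt_vf[OF Y Z] p])
  have "Dt Y (Dt (\<lambda>q. X1 q + X2 q) Z) p = Dt Y (\<lambda>q. Dt X1 Z q + Dt X2 Z q) p"
    by (rule Dt_loc2[OF Y Dt_vf[OF X Z] vf_add[OF Dt_vf[OF X1 Z] Dt_vf[OF X2 Z]] p]) (simp add: Dt_add1[OF X1 X2 Z])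
  also have "\<dots> = Dt Y (Dt X1 Z) p + Dt Y (Dt X2 Z) p"
    by (rule Dt_add2[OF Y Dt_vf[OF X1 Z] Dt_vf[OF X2 Z] p])
  finally have B: "Dt Y (Dt (\<lambda>q. X1 q + X2 q) Z) p = Dt Y (Dt X1 Z) p + Dt Y (Dt X2 Z) p" .
  have "Dt (lie (\<lambda>q. X1 q + X2 q) Y) Z p = Dt (\<lambda>q. lie X1 Y q + lie X2 Y q) Z p"
    by (rule Dt_loc1[OF vf_lie[OF X Y] vf_add[OF vf_lie[OF X1 Y] vf_lie[OF X2 Y]] Z p]) (simp add: lie_dir_add[OF X1 X2 Y])
  also have "\<dots> = Dt (lie X1 Y) Z p + Dt (lie X2 Y) Z p"
    by (rule Dt_add1[OF vf_lie[OF X1 Y] vf_lie[OF X2 Y] Z p])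
  finally have C: "Dt (lie (\<lambda>q. X1 q + X2 q) Y) Z p = Dt (lie X1 Y) Z p + Dt (lie X2 Y) Z p" .
  show ?thesis unfolding curv_def A B C by (simp add: algebra_simps)
qed

lemma curv_zero1: assumes Y: "Y \<in> vf U" and Z: "Z \<in> vf U" and p: "p \<in> U"
  shows "curv Dt (\<lambda>q. 0) Y Z p = 0"
proof -
  have "curv Dt (\<lambda>q. (\<lambda>q. 0::real) q *\<^sub>R Y q) Y Z p = (\<lambda>q. 0::real) p *\<^sub>R curv Dt Y Y Z p"
    by (rule curv_scale1[OF Y Y Z sm0 p])
  thus ?thesis by simp
qed

lemma curv_sum1: assumes "finite S" "\<And>i. i \<in> S \<Longrightarrow> X i \<in> vf U" "Y \<in> vf U" "Z \<in> vf U" "p \<in> U"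
  shows "curv Dt (\<lambda>q. \<Sum>i\<in>S. X i q) Y Z p = (\<Sum>i\<in>S. curv Dt (X i) Y Z p)"
  using assms(1,2)
proof (induction S rule: finite_induct)
  case empty thus ?case using curv_zero1[OF assms(3,4,5)] by simp
next
  case (insert x F)
  have "curv Dt (\<lambda>q. \<Sum>i\<in>insert x F. X i q) Y Z p = curv Dt (\<lambda>q. X x q + (\<Sum>i\<in>F. X i q)) Y Z p"
    using insert by simp
  also have "\<dots> = curv Dt (X x) Y Z p + curv Dt (\<lambda>q. \<Sum>i\<in>F. X i q) Y Z p"
    by (rule curv_add1) (use insert assms vf_sum[of F X] in auto)
  finally show ?case using insert by simp
qed

lemma curv_T1: assumes "X \<in> vf U" "Y \<in> vf U" "Z \<in> vf U" "p \<in> U"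
  shows "curv Dt X Y Z p = (\<Sum>b\<in>Basis. (X p \<bullet> b) *\<^sub>R curv Dt (cf b) Y Z p)"
proof -
  have "curv Dt X Y Z p = curv Dt (\<lambda>q. \<Sum>b\<in>Basis. (X q \<bullet> b) *\<^sub>R cf b q) Y Z p"
    using vf_repr[of X] by simp
  also have "\<dots> = (\<Sum>b\<in>Basis. curv Dt (\<lambda>q. (X q \<bullet> b) *\<^sub>R cf b q) Y Z p)"
    by (rule curv_sum1) (auto intro: vf_scale[OF sm_comp[OF assms(1)] vf_cf] assms)
  also have "\<dots> = (\<Sum>b\<in>Basis. (X p \<bullet> b) *\<^sub>R curv Dt (cf b) Y Z p)"
    by (rule sum.cong) (auto intro!: curv_scale1 sm_comp assms)
  finally show ?thesis .
qed

lemma K_X: assumes "X \<in> vf U" "Y \<in> vf U" "Z \<in> vf U" "p \<in> U"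
  shows "curv4 g Dt X Y Z W p = (\<Sum>a\<in>Basis. (X p \<bullet> a) * curv4 g Dt (cf a) Y Z W p)"
  using assms(4) by (simp add: curv4_def gF_def curv_T1[OF assms] g_sum1)

lemma K_W: assumes "p \<in> U"
  shows "curv4 g Dt X Y Z W p = (\<Sum>d\<in>Basis. (W p \<bullet> d) * curv4 g Dt X Y Z (cf d) p)"
proof -
  have "curv4 g Dt X Y Z W p = g p (curv Dt X Y Z p) (\<Sum>d\<in>Basis. (W p \<bullet> d) *\<^sub>R d)"
    by (simp add: curv4_def gF_def euclidean_representation)
  thus ?thesis using assms by (simp add: g_sum2 curv4_def gF_def cf_def)
qed

end



context ctx begin

definition Nv :: "'a \<Rightarrow> 'a \<Rightarrow> 'a" where "Nv p x = nabla (cf x) Om p"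

lemma Nv_expand: "p \<in> U \<Longrightarrow> Nv p x = (\<Sum>b\<in>Basis. (x \<bullet> b) *\<^sub>R Nv p b)"
  unfolding Nv_def using T1[OF vf_cf Om_vf] by (simp add: cf_def)

lemma Nv_T: "X \<in> vf U \<Longrightarrow> p \<in> U \<Longrightarrow> nabla X Om p = Nv p (X p)"
  using T1[OF _ Om_vf] Nv_expand by (simp add: Nv_def cf_def)

lemma Nv_add[simp]: "p \<in> U \<Longrightarrow> Nv p (x + y) = Nv p x + Nv p y"
  by (subst (1 2 3) Nv_expand) (simp_all add: inner_add_left scaleR_add_left sum.distrib)
lemma Nv_scale[simp]: "p \<in> U \<Longrightarrow> Nv p (c *\<^sub>R x) = c *\<^sub>R Nv p x"
  by (subst (1 2) Nv_expand) (simp_all add: scaleR_sum_right)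
lemma Nv_diff[simp]: "p \<in> U \<Longrightarrow> Nv p (x - y) = Nv p x - Nv p y"
  using Nv_add[of p x "- y"] Nv_scale[of p "-1" y] by simp
lemma Nv_neg[simp]: "p \<in> U \<Longrightarrow> Nv p (- y) = - Nv p y"
  using Nv_scale[of p "-1" y] by simp

lemma ddir_cmult: fixes h :: "'a \<Rightarrow> real" shows "smooth_on' U h \<Longrightarrow> p \<in> U \<Longrightarrow> ddir X (\<lambda>q. c * h q) p = c * ddir X h p"
  using ddir_mult[OF sm0, of h p X c] by simp

lemma dd_th: "X \<in> vf U \<Longrightarrow> Z \<in> vf U \<Longrightarrow> p \<in> U \<Longrightarrow>
   ddir X (th Z) p = g p (Nv p (X p)) (Z p) + g p (Om p) (nabla X Z p)"
proof -
  assume a: "X \<in> vf U" "Z \<in> vf U" "p \<in> U"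
  have "ddir X (th Z) p = ddir X (gF g Om Z) p"
    by (rule ddir_cong[OF sm_th[OF a(2)] a(3)]) (simp add: theta_Om gF_def)
  thus ?thesis using nab_metric[OF a(1) Om_vf a(2) a(3)] Nv_T[OF a(1) a(3)] by simp
qed

lemma dd_gP: "X \<in> vf U \<Longrightarrow> Y \<in> vf U \<Longrightarrow> Z \<in> vf U \<Longrightarrow> p \<in> U \<Longrightarrow>
   ddir X (gF g Y (PF P Z)) p = g p (nabla X Y p) (P p (Z p)) + g p (Y p) (P p (nabla X Z p) + Wv p (X p) (Z p))"
proof -
  assume a: "X \<in> vf U" "Y \<in> vf U" "Z \<in> vf U" "p \<in> U"
  have "nabla X (PF P Z) p = P p (nabla X Z p) + Wv p (X p) (Z p)" using W1v[OF a(1) a(3) a(4)] by (simp add: algebra_simps)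
  thus ?thesis using nab_metric[OF a(1) a(2) vf_PF[OF a(3)] a(4)] by (simp add: PF_def)
qed

lemma DD: assumes X: "X \<in> vf U" and Y: "Y \<in> vf U" and Z: "Z \<in> vf U" and p: "p \<in> U"
  shows "Dt X (Dt Y Z) p = nabla X (nabla Y Z) p
    + (1/4 * (g p (Nv p (X p)) (Z p) + g p (Om p) (nabla X Z p))) *\<^sub>R P p (Y p)
    + (1/4 * g p (Om p) (Z p)) *\<^sub>R (P p (nabla X Y p) + Wv p (X p) (Y p))
    - (1/4 * (g p (nabla X Y p) (P p (Z p)) + g p (Y p) (P p (nabla X Z p) + Wv p (X p) (Z p)))) *\<^sub>R Om p
    - (1/4 * g p (Y p) (P p (Z p))) *\<^sub>R Nv p (X p)
    + Qv p (X p) (nabla Y Z p + Qv p (Y p) (Z p))"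
proof -
  define f1 where "f1 = (\<lambda>q. 1/4 * th Z q)"
  define f2 where "f2 = (\<lambda>q. -1/4 * gF g Y (PF P Z) q)"
  have f1s: "smooth_on' U f1" unfolding f1_def by (intro sm_mult sm0 sm_th Z openU)
  have f2s: "smooth_on' U f2" unfolding f2_def by (intro sm_mult sm0 sm_gF Y vf_PF Z openU)
  have B1: "(\<lambda>q. f1 q *\<^sub>R PF P Y q) \<in> vf U" by (intro vf_scale f1s vf_PF Y)
  have B2: "(\<lambda>q. f2 q *\<^sub>R Om q) \<in> vf U" by (intro vf_scale f2s Om_vf)
  have e: "Dt Y Z = (\<lambda>q. nabla Y Z q + (\<lambda>q. f1 q *\<^sub>R PF P Y q + f2 q *\<^sub>R Om q) q)"
    unfolding f1_def f2_def by (subst Dt_fun) simp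
  have "nabla X (Dt Y Z) p = nabla X (nabla Y Z) p + nabla X (\<lambda>q. f1 q *\<^sub>R PF P Y q + f2 q *\<^sub>R Om q) p"
    unfolding e by (rule nab_add2[OF X nab_vf[OF Y Z] vf_add[OF B1 B2] p])
  also have "nabla X (\<lambda>q. f1 q *\<^sub>R PF P Y q + f2 q *\<^sub>R Om q) p
     = nabla X (\<lambda>q. f1 q *\<^sub>R PF P Y q) p + nabla X (\<lambda>q. f2 q *\<^sub>R Om q) p"
    by (rule nab_add2[OF X B1 B2 p])
  also have "nabla X (\<lambda>q. f1 q *\<^sub>R PF P Y q) p = ddir X f1 p *\<^sub>R PF P Y p + f1 p *\<^sub>R nabla X (PF P Y) p"
    by (rule nab_scale2[OF X vf_PF[OF Y] f1s p])
  also have "nabla X (\<lambda>q. f2 q *\<^sub>R Om q) p = ddir X f2 p *\<^sub>R Om p + f2 p *\<^sub>R nabla X Om p"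
    by (rule nab_scale2[OF X Om_vf f2s p])
  finally have n: "nabla X (Dt Y Z) p = nabla X (nabla Y Z) p + (ddir X f1 p *\<^sub>R PF P Y p + f1 p *\<^sub>R nabla X (PF P Y) p
      + (ddir X f2 p *\<^sub>R Om p + f2 p *\<^sub>R nabla X Om p))" .
  have d1: "ddir X f1 p = 1/4 * (g p (Nv p (X p)) (Z p) + g p (Om p) (nabla X Z p))"
    unfolding f1_def using ddir_cmult[OF sm_th[OF Z] p, of X "1/4"] dd_th[OF X Z p] by simp
  have d2: "ddir X f2 p = -1/4 * (g p (nabla X Y p) (P p (Z p)) + g p (Y p) (P p (nabla X Z p) + Wv p (X p) (Z p)))"
    unfolding f2_def using ddir_cmult[OF sm_gF[OF Y vf_PF[OF Z]] p, of X "-1/4"] dd_gP[OF X Y Z p] by simp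
  have w: "nabla X (PF P Y) p = P p (nabla X Y p) + Wv p (X p) (Y p)" using W1v[OF X Y p] by (simp add: algebra_simps)
  have "Dt X (Dt Y Z) p = nabla X (Dt Y Z) p + Qv p (X p) (Dt Y Z p)" by (rule Dt_eq[OF p])
  also have "Dt Y Z p = nabla Y Z p + Qv p (Y p) (Z p)" by (rule Dt_eq[OF p])
  finally show ?thesis unfolding n d1 d2 w Nv_T[OF X p] using p
    by (simp add: f1_def f2_def theta_Om gF_def PF_def algebra_simps)
qed

definition nQ :: "'a \<Rightarrow> 'a \<Rightarrow> 'a \<Rightarrow> 'a \<Rightarrow> 'a" where
  "nQ p x y z = (1/4) *\<^sub>R (g p (Nv p x) z *\<^sub>R P p y + g p (Om p) z *\<^sub>R Wv p x y
     - g p y (Wv p x z) *\<^sub>R Om p - g p y (P p z) *\<^sub>R Nv p x)"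

definition Cv :: "'a \<Rightarrow> 'a \<Rightarrow> 'a \<Rightarrow> 'a \<Rightarrow> 'a" where
  "Cv p x y z = nQ p x y z - nQ p y x z + Qv p x (Qv p y z) - Qv p y (Qv p x z)"

lemma Rel: assumes X: "X \<in> vf U" and Y: "Y \<in> vf U" and Z: "Z \<in> vf U" and p: "p \<in> U"
  shows "curv Dt X Y Z p = curv nabla X Y Z p + Cv p (X p) (Y p) (Z p)"
proof -
  have l: "lie X Y p = nabla X Y p - nabla Y X p" using nab_tors[OF X Y p] by simp
  have L: "Dt (lie X Y) Z p = nabla (lie X Y) Z p + Qv p (nabla X Y p - nabla Y X p) (Z p)"
    using Dt_eq[OF p] l by simp
  show ?thesis unfolding curv_def DD[OF X Y Z p] DD[OF Y X Z p] L using p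
    by (simp add: Cv_def nQ_def Qv_def algebra_simps)
qed

end



definition psi1p :: "('a \<Rightarrow> 'a \<Rightarrow> real) \<Rightarrow> ('a \<Rightarrow> 'a \<Rightarrow> real) \<Rightarrow> 'a \<Rightarrow> 'a \<Rightarrow> 'a \<Rightarrow> 'a \<Rightarrow> real" where
  "psi1p G S x y z w = G y z * S x w - G x z * S y w + S y z * G x w - S x z * G y w"

context ctx begin

definition S1p where "S1p p a b = 1/16 * g p (Om p) a * g p (Om p) b"
definition S2p where "S2p p a b = -1/4 * (g p (Nv p a) (P p b) - g p (Om p) (Qv p a (P p b)))
    - 1/16 * g p (Om p) (P p a) * g p (Om p) (P p b)"

lemma I1: assumes p: "p \<in> U"
  shows "g p (Cv p x y z) w = (g p (Om p) (Om p) / 16) * ((1/2) * psi1p (g p) (g p) x y (P p z) (P p w))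
     + psi1p (g p) (S1p p) x y z w + psi1p (g p) (S2p p) x y (P p z) (P p w)"
proof -
  let ?O = "Om p"
  note s = gs[OF p, of y x] gs[OF p, of z x] gs[OF p, of w x] gs[OF p, of ?O x]
     gs[OF p, of z y] gs[OF p, of w y] gs[OF p, of ?O y] gs[OF p, of w z] gs[OF p, of ?O z] gs[OF p, of ?O w]
  have sp: "g p y (P p x) = g p x (P p y)" "g p z (P p x) = g p x (P p z)" "g p w (P p x) = g p x (P p w)"
    "g p ?O (P p x) = g p x (P p ?O)" "g p z (P p y) = g p y (P p z)" "g p w (P p y) = g p y (P p w)"
    "g p ?O (P p y) = g p y (P p ?O)" "g p w (P p z) = g p z (P p w)" "g p ?O (P p z) = g p z (P p ?O)"
    "g p ?O (P p w) = g p w (P p ?O)"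
    using p gP1 gs by metis+
  show ?thesis using p
    unfolding Cv_def nQ_def Qv_def Wv_def psi1p_def S1p_def S2p_def
    by (simp add: gP1 s sp algebra_simps)
qed

end



context ctx begin

lemma Gmap_lin: "p \<in> U \<Longrightarrow> linear (Gmap g p)"
proof -
  assume p: "p \<in> U"
  show ?thesis unfolding Gmap_def
    by (intro linear_compose_sum ballI linearI) (use p in \<open>auto simp: scaleR_add_left\<close>)
qed

lemma Gmap_inner: "p \<in> U \<Longrightarrow> Gmap g p u \<bullet> v = g p u v"
proof -
  assume p: "p \<in> U"
  have "Gmap g p u \<bullet> v = (\<Sum>b\<in>Basis. g p u b * (b \<bullet> v))" by (simp add: Gmap_def inner_sum_left)
  also have "\<dots> = g p u (\<Sum>b\<in>Basis. (v \<bullet> b) *\<^sub>R b)" using p by (simp add: g_sum2 inner_commute mult.commute)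
  finally show ?thesis by (simp add: euclidean_representation)
qed

lemma Gmap_inj: "p \<in> U \<Longrightarrow> inj (Gmap g p)"
proof -
  assume p: "p \<in> U"
  have "u = v" if "Gmap g p u = Gmap g p v" for u v
    using g_nondeg[OF p] that Gmap_inner[OF p] by metis
  thus ?thesis by (rule injI)
qed

lemma Gmap_surj: "p \<in> U \<Longrightarrow> surj (Gmap g p)"
  using linear_injective_imp_surjective Gmap_lin Gmap_inj by blast

definition wv where "wv p i = inv (Gmap g p) i"

lemma wv_g: "p \<in> U \<Longrightarrow> g p (wv p i) v = i \<bullet> v"
  using Gmap_inner[of p "wv p i" v] surj_f_inv_f[OF Gmap_surj] by (simp add: wv_def)

lemma ginv_wv: "ginv g p i j = wv p i \<bullet> j" by (simp add: ginv_def wv_def)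

lemma ginv_sum: assumes p: "p \<in> U" and B: "\<And>x. linear (B x)"
  shows "(\<Sum>i\<in>Basis. \<Sum>j\<in>Basis. ginv g p i j * B i j) = (\<Sum>i\<in>Basis. B i (wv p i))"
proof (rule sum.cong[OF refl])
  fix i
  have "B i (wv p i) = B i (\<Sum>j\<in>Basis. (wv p i \<bullet> j) *\<^sub>R j)" by (simp add: euclidean_representation)
  also have "\<dots> = (\<Sum>j\<in>Basis. (wv p i \<bullet> j) * B i j)" using B[of i] by (simp add: linear_sum linear_scale)
  finally show "(\<Sum>j\<in>Basis. ginv g p i j * B i j) = B i (wv p i)" by (simp add: ginv_wv)
qed

definition ONL :: "'a \<Rightarrow> 'a list \<Rightarrow> bool" where
  "ONL p fs = (\<forall>i<length fs. \<forall>j<length fs. g p (fs!i) (fs!j) = (if i = j then 1 else 0))"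

definition SPL :: "'a \<Rightarrow> 'a list \<Rightarrow> 'a set \<Rightarrow> bool" where
  "SPL p fs S = (\<forall>v\<in>S. v = sum_list (map (\<lambda>f. g p v f *\<^sub>R f) fs))"

lemma ON_exists: assumes p: "p \<in> U" shows "subspace S \<Longrightarrow> \<exists>fs. set fs \<subseteq> S \<and> ONL p fs \<and> SPL p fs S"
proof (induction "dim S" arbitrary: S rule: less_induct)
  case less
  show ?case
  proof (cases "S \<subseteq> {0}")
    case True
    thus ?thesis by (intro exI[of _ "[]"]) (auto simp: ONL_def SPL_def)
  next
    case False
    then obtain v where v: "v \<in> S" "v \<noteq> 0" by auto
    define f where "f = (1 / sqrt (g p v v)) *\<^sub>R v"
    have gv: "g p v v > 0" using gpos[OF p v(2)] .
    have ff: "g p f f = 1" using gv p by (simp add: f_def real_sqrt_mult[symmetric])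
    have fS: "f \<in> S" using less.prems v(1) by (simp add: f_def subspace_scale)
    define S' where "S' = {u \<in> S. g p f u = 0}"
    have sub': "subspace S'" using less.prems p unfolding S'_def subspace_def by auto
    have "f \<notin> S'" using ff unfolding S'_def by auto
    hence "S' \<subset> S" using fS unfolding S'_def by auto
    moreover have e1: "span S' = S'" using sub' by (rule span_eq_iff[THEN iffD2])
    moreover have e2: "span S = S" using less.prems by (rule span_eq_iff[THEN iffD2])
    ultimately have "span S' \<subset> span S" by (simp only:)
    hence "dim S' < dim S" by (rule dim_psubset)
    then obtain fs where fs: "set fs \<subseteq> S'" "ONL p fs" "SPL p fs S'" using less.hyps sub' by blast
    have orth: "g p f (fs!j) = 0" "g p (fs!j) f = 0" if "j < length fs" for j
    proof -
      have "fs!j \<in> S'" using fs(1) nth_mem[OF that] by blast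
      hence "g p f (fs!j) = 0" unfolding S'_def by blast
      thus "g p f (fs!j) = 0" "g p (fs!j) f = 0" using gs[OF p] by metis+
    qed
    have "ONL p (f # fs)"
      unfolding ONL_def
    proof (intro allI impI)
      fix i j assume "i < length (f # fs)" "j < length (f # fs)"
      thus "g p ((f # fs) ! i) ((f # fs) ! j) = (if i = j then 1 else 0)"
        using fs(2) ff orth by (cases i; cases j) (auto simp: ONL_def)
    qed
    moreover have "SPL p (f # fs) S"
      unfolding SPL_def
    proof
      fix u assume u: "u \<in> S"
      define u' where "u' = u - g p u f *\<^sub>R f"
      have "u' \<in> S'" using u fS less.prems p ff gs[OF p, of f u] unfolding S'_def u'_def
        by (simp add: subspace_diff subspace_scale)
      hence "u' = sum_list (map (\<lambda>h. g p u' h *\<^sub>R h) fs)" using fs(3) by (simp add: SPL_def)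
      moreover have "map (\<lambda>h. g p u' h *\<^sub>R h) fs = map (\<lambda>h. g p u h *\<^sub>R h) fs"
      proof (rule map_cong[OF refl])
        fix h assume "h \<in> set fs"
        then obtain j where "j < length fs" "h = fs!j" by (metis in_set_conv_nth)
        thus "g p u' h *\<^sub>R h = g p u h *\<^sub>R h" using orth p by (simp add: u'_def)
      qed
      ultimately have "u' = sum_list (map (\<lambda>h. g p u h *\<^sub>R h) fs)" by simp
      thus "u = sum_list (map (\<lambda>h. g p u h *\<^sub>R h) (f # fs))" by (simp add: u'_def algebra_simps)
    qed
    moreover have "set (f # fs) \<subseteq> S" using fS fs(1) unfolding S'_def by auto
    ultimately show ?thesis by blast
  qed
qed

lemma lin_sum_list: "linear L \<Longrightarrow> L (sum_list (map h fs)) = sum_list (map (\<lambda>f. L (h f)) fs)"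
  by (induction fs) (simp_all add: linear_add linear_0)

lemma sum_sum_list: "(\<Sum>i\<in>S. sum_list (map (h i) fs)) = sum_list (map (\<lambda>f. \<Sum>i\<in>S. h i f) fs)"
  by (induction fs) (simp_all add: sum.distrib)

lemma TR_list: assumes p: "p \<in> U" and sp: "SPL p fs UNIV"
  and B1: "\<And>y. linear (\<lambda>x. B x y)" and B2: "\<And>x. linear (B x)"
  shows "(\<Sum>i\<in>Basis. \<Sum>j\<in>Basis. ginv g p i j * B i j) = sum_list (map (\<lambda>f. B f f) fs)"
proof -
  have w: "wv p i = sum_list (map (\<lambda>f. (f \<bullet> i) *\<^sub>R f) fs)" for i
  proof (rule g_nondeg[OF p])
    fix v
    have "i \<bullet> v = i \<bullet> sum_list (map (\<lambda>f. g p v f *\<^sub>R f) fs)" using sp by (simp add: SPL_def)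
    also have "\<dots> = sum_list (map (\<lambda>f. (f \<bullet> i) * g p f v) fs)"
      by (induction fs) (simp_all add: inner_add_right gs[OF p] inner_commute)
    also have "\<dots> = g p (sum_list (map (\<lambda>f. (f \<bullet> i) *\<^sub>R f) fs)) v"
      using p by (induction fs) simp_all
    finally show "g p (wv p i) v = g p (sum_list (map (\<lambda>f. (f \<bullet> i) *\<^sub>R f) fs)) v"
      using wv_g[OF p] by simp
  qed
  have "(\<Sum>i\<in>Basis. \<Sum>j\<in>Basis. ginv g p i j * B i j) = (\<Sum>i\<in>Basis. B i (wv p i))"
    by (rule ginv_sum[OF p B2])
  also have "\<dots> = (\<Sum>i\<in>Basis. sum_list (map (\<lambda>f. (f \<bullet> i) * B i f) fs))"
    unfolding w using B2 by (simp add: lin_sum_list linear_scale)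
  also have "\<dots> = sum_list (map (\<lambda>f. \<Sum>i\<in>Basis. (f \<bullet> i) * B i f) fs)"
    by (rule sum_sum_list)
  also have "\<dots> = sum_list (map (\<lambda>f. B f f) fs)"
  proof -
    have "(\<Sum>i\<in>Basis. (f \<bullet> i) * B i f) = B f f" for f
    proof -
      have "B f f = B (\<Sum>i\<in>Basis. (f \<bullet> i) *\<^sub>R i) f" by (simp add: euclidean_representation)
      also have "\<dots> = (\<Sum>i\<in>Basis. (f \<bullet> i) * B i f)"
        using linear_sum[OF B1[of f], of "\<lambda>i. (f \<bullet> i) *\<^sub>R i" Basis] linear_scale[OF B1[of f]] by simp
      finally show ?thesis by simp
    qed
    thus ?thesis by simp
  qed
  finally show ?thesis .
qed

lemma len2: "length xs = 2 \<Longrightarrow> \<exists>a b. xs = [a, b]"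
  by (cases xs; cases "tl xs") auto

lemma ONL_one: "ONL p fs \<Longrightarrow> f \<in> set fs \<Longrightarrow> g p f f = 1"
  unfolding ONL_def by (metis in_set_conv_nth)

lemma FR: assumes p: "p \<in> U"
  shows "\<exists>f1 f2 f3 f4. g p f1 f1 = 1 \<and> g p f2 f2 = 1 \<and> g p f3 f3 = 1 \<and> g p f4 f4 = 1 \<and>
    g p f1 f2 = 0 \<and> g p f1 f3 = 0 \<and> g p f1 f4 = 0 \<and> g p f2 f3 = 0 \<and> g p f2 f4 = 0 \<and> g p f3 f4 = 0 \<and>
    P p f1 = f1 \<and> P p f2 = f2 \<and> P p f3 = - f3 \<and> P p f4 = - f4 \<and> SPL p [f1, f2, f3, f4] UNIV"
proof -
  define Vp where "Vp = {u. P p u = u}"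
  define Vm where "Vm = {u. P p u = - u}"
  have sVp: "subspace Vp" unfolding Vp_def subspace_def using p by simp
  have sVm: "subspace Vm" unfolding Vm_def subspace_def using p by simp
  obtain fp where fp: "set fp \<subseteq> Vp" "ONL p fp" "SPL p fp Vp" using ON_exists[OF p sVp] by blast
  obtain fm where fm: "set fm \<subseteq> Vm" "ONL p fm" "SPL p fm Vm" using ON_exists[OF p sVm] by blast
  have cross: "g p u v = 0" if "u \<in> Vp" "v \<in> Vm" for u v
  proof -
    have "g p u v = g p (P p u) (P p v)" using p by simp
    also have "\<dots> = - g p u v" using that p by (simp add: Vp_def Vm_def)
    finally show ?thesis by simp
  qed
  have spl: "SPL p (fp @ fm) UNIV"
    unfolding SPL_def
  proof
    fix v :: 'a
    define v1 where "v1 = (1/2) *\<^sub>R (v + P p v)"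
    define v2 where "v2 = (1/2) *\<^sub>R (v - P p v)"
    have v1: "v1 \<in> Vp" using p by (simp add: Vp_def v1_def algebra_simps)
    have v2: "v2 \<in> Vm" using p by (simp add: Vm_def v2_def algebra_simps)
    have "v1 + v2 = (1/2 + 1/2) *\<^sub>R v"
      unfolding v1_def v2_def scaleR_add_right scaleR_diff_right scaleR_add_left by simp
    hence v12: "v = v1 + v2" by simp
    have m1: "map (\<lambda>f. g p v1 f *\<^sub>R f) fp = map (\<lambda>f. g p v f *\<^sub>R f) fp"
    proof (rule map_cong[OF refl])
      fix f assume "f \<in> set fp"
      hence "g p v2 f = 0" using cross[of f v2] fp(1) v2 gs[OF p] by auto
      moreover have "g p v f = g p v1 f + g p v2 f" using p g_add1[of p v1 v2 f] v12 by simp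
      ultimately show "g p v1 f *\<^sub>R f = g p v f *\<^sub>R f" by simp
    qed
    have m2: "map (\<lambda>f. g p v2 f *\<^sub>R f) fm = map (\<lambda>f. g p v f *\<^sub>R f) fm"
    proof (rule map_cong[OF refl])
      fix f assume "f \<in> set fm"
      hence "g p v1 f = 0" using cross[of v1 f] fm(1) v1 by auto
      moreover have "g p v f = g p v1 f + g p v2 f" using p g_add1[of p v1 v2 f] v12 by simp
      ultimately show "g p v2 f *\<^sub>R f = g p v f *\<^sub>R f" by simp
    qed
    have e1: "v1 = sum_list (map (\<lambda>f. g p v1 f *\<^sub>R f) fp)" using fp(3) v1 by (simp add: SPL_def)
    have e2: "v2 = sum_list (map (\<lambda>f. g p v2 f *\<^sub>R f) fm)" using fm(3) v2 by (simp add: SPL_def)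
    have "sum_list (map (\<lambda>f. g p v f *\<^sub>R f) (fp @ fm)) = v1 + v2"
      by (subst e1, subst e2) (simp only: map_append sum_list_append m1 m2)
    thus "v = sum_list (map (\<lambda>f. g p v f *\<^sub>R f) (fp @ fm))" using v12 by simp
  qed
  have lg1: "linear (\<lambda>x. g p x y)" for y using gb[OF p] by (simp add: bilinear_def)
  have lg2: "linear (g p x)" for x using gb[OF p] by (simp add: bilinear_def)
  have lgP: "linear (\<lambda>v. g p x (P p v))" for x using linear_compose[OF Pl[OF p] lg2[of x]] by (simp add: o_def)
  have "(\<Sum>i\<in>Basis. \<Sum>j\<in>Basis. ginv g p i j * g p i j) = sum_list (map (\<lambda>f. g p f f) (fp @ fm))"
    by (rule TR_list[OF p spl lg1 lg2])
  moreover have "(\<Sum>i\<in>Basis. \<Sum>j\<in>Basis. ginv g p i j * g p i j) = (\<Sum>i\<in>(Basis::'a set). g p i (wv p i))"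
    by (rule ginv_sum[OF p lg2])
  moreover have "(\<Sum>i\<in>(Basis::'a set). g p i (wv p i)) = 4"
    using wv_g[OF p] gs[OF p] dim4 by simp
  moreover have "sum_list (map (\<lambda>f. g p f f) fp) = length fp"
    using ONL_one[OF fp(2)] by (induction fp) auto
  moreover have "sum_list (map (\<lambda>f. g p f f) fm) = length fm"
    using ONL_one[OF fm(2)] by (induction fm) auto
  ultimately have L1: "length fp + length fm = 4" by simp
  have "(\<Sum>i\<in>Basis. \<Sum>j\<in>Basis. ginv g p i j * g p i (P p j)) = sum_list (map (\<lambda>f. g p f (P p f)) (fp @ fm))"
    by (rule TR_list[OF p spl]) (use lg1 lgP p in \<open>simp_all add: linear_compose\<close>)
  moreover have "(\<Sum>i\<in>Basis. \<Sum>j\<in>Basis. ginv g p i j * g p i (P p j)) = (\<Sum>i\<in>(Basis::'a set). g p i (P p (wv p i)))"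
    by (rule ginv_sum[OF p lgP])
  moreover have "(\<Sum>i\<in>(Basis::'a set). g p i (P p (wv p i))) = 0"
  proof -
    have "g p i (P p (wv p i)) = P p i \<bullet> i" for i
      using gP1[OF p, of i "wv p i"] gs[OF p, of "P p i" "wv p i"] wv_g[OF p] inner_commute by metis
    thus ?thesis using trP[OF p] by simp
  qed
  moreover have "sum_list (map (\<lambda>f. g p f (P p f)) fp) = length fp"
    using ONL_one[OF fp(2)] fp(1) by (induction fp) (auto simp: Vp_def)
  moreover have "sum_list (map (\<lambda>f. g p f (P p f)) fm) = - real (length fm)"
    using ONL_one[OF fm(2)] fm(1) p by (induction fm) (auto simp: Vm_def)
  ultimately have L2: "real (length fp) - real (length fm) = 0" by simp
  have "length fp = 2" "length fm = 2" using L1 L2 by linarith+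
  then obtain f1 f2 f3 f4 where e: "fp = [f1, f2]" "fm = [f3, f4]" using len2 by metis
  have hfp: "\<And>i j. i < 2 \<Longrightarrow> j < 2 \<Longrightarrow> g p ([f1,f2]!i) ([f1,f2]!j) = (if i=j then 1 else 0)"
    using fp(2) unfolding e ONL_def by auto
  have on1: "g p f1 f1 = 1" "g p f2 f2 = 1" "g p f1 f2 = 0"
    using hfp[of 0 0] hfp[of 1 1] hfp[of 0 1] by simp_all
  have hfm: "\<And>i j. i < 2 \<Longrightarrow> j < 2 \<Longrightarrow> g p ([f3,f4]!i) ([f3,f4]!j) = (if i=j then 1 else 0)"
    using fm(2) unfolding e ONL_def by auto
  have on2: "g p f3 f3 = 1" "g p f4 f4 = 1" "g p f3 f4 = 0"
    using hfm[of 0 0] hfm[of 1 1] hfm[of 0 1] by simp_all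
  have inV: "f1 \<in> Vp" "f2 \<in> Vp" "f3 \<in> Vm" "f4 \<in> Vm" using fp(1) fm(1) e by auto
  have on3: "g p f1 f3 = 0" "g p f1 f4 = 0" "g p f2 f3 = 0" "g p f2 f4 = 0"
    using cross inV by auto
  show ?thesis
    apply (rule exI[of _ f1], rule exI[of _ f2], rule exI[of _ f3], rule exI[of _ f4])
    using on1 on2 on3 inV spl e by (simp add: Vp_def Vm_def)
qed

end



definition ML4 :: "('a::real_vector \<Rightarrow> 'a \<Rightarrow> 'a \<Rightarrow> 'a \<Rightarrow> real) \<Rightarrow> bool" where
  "ML4 k = ((\<forall>y z w. linear (\<lambda>x. k x y z w)) \<and> (\<forall>x z w. linear (\<lambda>y. k x y z w)) \<and>
            (\<forall>x y w. linear (\<lambda>z. k x y z w)) \<and> (\<forall>x y z. linear (\<lambda>w. k x y z w)))"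

lemma ml_add1[simp]: "ML4 k \<Longrightarrow> k (x + x') y z w = k x y z w + k x' y z w"
  unfolding ML4_def using linear_add by blast
lemma ml_add2[simp]: "ML4 k \<Longrightarrow> k x (y + y') z w = k x y z w + k x y' z w"
  unfolding ML4_def using linear_add[of "\<lambda>y. k x y z w"] by blast
lemma ml_add3[simp]: "ML4 k \<Longrightarrow> k x y (z + z') w = k x y z w + k x y z' w"
  unfolding ML4_def using linear_add[of "\<lambda>z. k x y z w"] by blast
lemma ml_add4[simp]: "ML4 k \<Longrightarrow> k x y z (w + w') = k x y z w + k x y z w'"
  unfolding ML4_def using linear_add[of "\<lambda>w. k x y z w"] by blast
lemma ml_scale1[simp]: "ML4 k \<Longrightarrow> k (c *\<^sub>R x) y z w = c * k x y z w"
  unfolding ML4_def using linear_scale[of "\<lambda>x. k x y z w"] by fastforce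
lemma ml_scale2[simp]: "ML4 k \<Longrightarrow> k x (c *\<^sub>R y) z w = c * k x y z w"
  unfolding ML4_def using linear_scale[of "\<lambda>y. k x y z w"] by fastforce
lemma ml_scale3[simp]: "ML4 k \<Longrightarrow> k x y (c *\<^sub>R z) w = c * k x y z w"
  unfolding ML4_def using linear_scale[of "\<lambda>z. k x y z w"] by fastforce
lemma ml_scale4[simp]: "ML4 k \<Longrightarrow> k x y z (c *\<^sub>R w) = c * k x y z w"
  unfolding ML4_def using linear_scale[of "\<lambda>w. k x y z w"] by fastforce
lemma ml_neg3[simp]: "ML4 k \<Longrightarrow> k x y (- z) w = - k x y z w"
  using ml_scale3[of k x y "-1" z w] by simp
lemma ml_neg4[simp]: "ML4 k \<Longrightarrow> k x y z (- w) = - k x y z w"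
  using ml_scale4[of k x y z "-1" w] by simp
lemma ml_neg1[simp]: "ML4 k \<Longrightarrow> k (- x) y z w = - k x y z w"
  using ml_scale1[of k "-1" x y z w] by simp
lemma ml_neg2[simp]: "ML4 k \<Longrightarrow> k x (- y) z w = - k x y z w"
  using ml_scale2[of k x "-1" y z w] by simp

context ctx begin

definition RP4 :: "'a \<Rightarrow> ('a \<Rightarrow> 'a \<Rightarrow> 'a \<Rightarrow> 'a \<Rightarrow> real) \<Rightarrow> bool" where
  "RP4 p k = ((\<forall>x y z w. k x y z w = - k y x z w) \<and> (\<forall>x y z w. k x y z w = - k x y w z) \<and>
     (\<forall>x y z w. k x y z w + k y z x w + k z x y w = 0) \<and> (\<forall>x y z w. k x y (P p z) (P p w) = k x y z w))"

lemma pair_sym: assumes "RP4 p k" shows "k x y z w = k z w x y"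
proof -
  have a1: "\<And>x y z w. k x y z w = - k y x z w" and a2: "\<And>x y z w. k x y z w = - k x y w z"
    and b: "\<And>x y z w. k x y z w + k y z x w + k z x y w = 0" using assms unfolding RP4_def by blast+
  have "k x y z w + k y z x w + k z x y w = 0" "k y z w x + k z w y x + k w y z x = 0"
    "k z w x y + k w x z y + k x z w y = 0" "k w x y z + k x y w z + k y w x z = 0" using b by blast+
  moreover have "k y z w x = - k y z x w" "k z w y x = - k z w x y" "k w y z x = - k w y x z"
    "k w x z y = - k x w z y" "k x z w y = - k x z y w" "k x y w z = - k x y z w" "k y w x z = - k w y x z"
    "k w x y z = - k x w y z" "k z x y w = - k x z y w" "k x w z y = - k x w y z"
    using a1 a2 by metis+
  ultimately show ?thesis by linarith
qed

definition FRM :: "'a \<Rightarrow> 'a \<Rightarrow> 'a \<Rightarrow> 'a \<Rightarrow> 'a \<Rightarrow> bool" where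
  "FRM p f1 f2 f3 f4 = (g p f1 f1 = 1 \<and> g p f2 f2 = 1 \<and> g p f3 f3 = 1 \<and> g p f4 f4 = 1 \<and>
    g p f1 f2 = 0 \<and> g p f1 f3 = 0 \<and> g p f1 f4 = 0 \<and> g p f2 f3 = 0 \<and> g p f2 f4 = 0 \<and> g p f3 f4 = 0 \<and>
    P p f1 = f1 \<and> P p f2 = f2 \<and> P p f3 = - f3 \<and> P p f4 = - f4 \<and> SPL p [f1, f2, f3, f4] UNIV)"

lemma FRM_ex: assumes "p \<in> U" shows "\<exists>f1 f2 f3 f4. FRM p f1 f2 f3 f4"
  unfolding FRM_def by (rule FR[OF assms])

definition Dd :: "'a \<Rightarrow> 'a \<Rightarrow> 'a \<Rightarrow> 'a \<Rightarrow> 'a \<Rightarrow> real" where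
  "Dd p a b x y = g p x a * g p y b - g p x b * g p y a"

lemma decomp: assumes p: "p \<in> U" and ml: "ML4 k" and rp: "RP4 p k" and fr: "FRM p f1 f2 f3 f4"
  shows "k x y z w = k f1 f2 f1 f2 * Dd p f1 f2 x y * Dd p f1 f2 z w + k f3 f4 f3 f4 * Dd p f3 f4 x y * Dd p f3 f4 z w"
proof -
  have F: "g p f1 f1 = 1" "g p f2 f2 = 1" "g p f3 f3 = 1" "g p f4 f4 = 1"
    "g p f1 f2 = 0" "g p f1 f3 = 0" "g p f1 f4 = 0" "g p f2 f3 = 0" "g p f2 f4 = 0" "g p f3 f4 = 0"
    "P p f1 = f1" "P p f2 = f2" "P p f3 = - f3" "P p f4 = - f4" and sp: "SPL p [f1, f2, f3, f4] UNIV"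
    using fr by (auto simp: FRM_def)
  have a1: "\<And>x y z w. k x y z w = - k y x z w" and a2: "\<And>x y z w. k x y z w = - k x y w z"
    and b: "\<And>x y z w. k x y z w + k y z x w + k z x y w = 0"
    and pi: "\<And>x y z w. k x y (P p z) (P p w) = k x y z w" using rp unfolding RP4_def by blast+
  have z1: "k u u z w = 0" for u z w using a1[of u u z w] by simp
  have z2: "k x y u u = 0" for x y u using a2[of x y u u] by simp
  have m2: "k x y u v = 0" if "P p u = u" "P p v = - v" for x y u v
    using pi[of x y u v] that ml by simp
  have m2': "k x y v u = 0" if "P p u = u" "P p v = - v" for x y u v
    using pi[of x y v u] that ml by simp
  have m1: "k u v z w = 0" if "P p u = u" "P p v = - v" for z w u v
    using m2[OF that, of z w] pair_sym[OF rp, of u v z w] by simp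
  have m1': "k v u z w = 0" if "P p u = u" "P p v = - v" for z w u v
    using m2'[OF that, of z w] pair_sym[OF rp, of v u z w] by simp
  have c1: "k a b c d = 0" if "P p a = a" "P p b = b" "P p c = - c" "P p d = - d" for a b c d
    using b[of a b c d] m1[of b c a d] m1'[of a c b d] that by simp
  have c2: "k c d a b = 0" if "P p a = a" "P p b = b" "P p c = - c" "P p d = - d" for a b c d
    using c1[OF that] pair_sym[OF rp, of a b c d] by simp
  have s1: "k f2 f1 z w = - k f1 f2 z w" "k f4 f3 z w = - k f3 f4 z w" for z w using a1 by blast+
  have s2: "k x y f2 f1 = - k x y f1 f2" "k x y f4 f3 = - k x y f3 f4" for x y using a2 by blast+
  have ex: "v = g p v f1 *\<^sub>R f1 + g p v f2 *\<^sub>R f2 + g p v f3 *\<^sub>R f3 + g p v f4 *\<^sub>R f4" for v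
    using sp by (simp add: SPL_def add.assoc)
  have "k x y z w = k (g p x f1 *\<^sub>R f1 + g p x f2 *\<^sub>R f2 + g p x f3 *\<^sub>R f3 + g p x f4 *\<^sub>R f4)
       (g p y f1 *\<^sub>R f1 + g p y f2 *\<^sub>R f2 + g p y f3 *\<^sub>R f3 + g p y f4 *\<^sub>R f4)
       (g p z f1 *\<^sub>R f1 + g p z f2 *\<^sub>R f2 + g p z f3 *\<^sub>R f3 + g p z f4 *\<^sub>R f4)
       (g p w f1 *\<^sub>R f1 + g p w f2 *\<^sub>R f2 + g p w f3 *\<^sub>R f3 + g p w f4 *\<^sub>R f4)"
    using ex[of x] ex[of y] ex[of z] ex[of w] by simp
  also have "\<dots> = k f1 f2 f1 f2 * Dd p f1 f2 x y * Dd p f1 f2 z w + k f3 f4 f3 f4 * Dd p f3 f4 x y * Dd p f3 f4 z w"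
    using ml F by (simp add: z1 z2 m1 m1' m2 m2' c1 c2 s1 s2 Dd_def algebra_simps)
  finally show ?thesis .
qed

end



locale ctx2 = ctx U g P nabla for U :: "'a::euclidean_space set" and g P nabla +
  assumes rp: "is_RPtensor U P (curv4 g (Dtil g P nabla))"
begin
abbreviation "K \<equiv> curv4 g Dt"

lemma rpA: "X \<in> vf U \<Longrightarrow> Y \<in> vf U \<Longrightarrow> Z \<in> vf U \<Longrightarrow> W \<in> vf U \<Longrightarrow> p \<in> U \<Longrightarrow> K X Y Z W p = - K Y X Z W p"
  using rp unfolding is_RPtensor_def by blast
lemma rpB: "X \<in> vf U \<Longrightarrow> Y \<in> vf U \<Longrightarrow> Z \<in> vf U \<Longrightarrow> W \<in> vf U \<Longrightarrow> p \<in> U \<Longrightarrow> K X Y Z W p = - K X Y W Z p"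
  using rp unfolding is_RPtensor_def by blast
lemma rpC: "X \<in> vf U \<Longrightarrow> Y \<in> vf U \<Longrightarrow> Z \<in> vf U \<Longrightarrow> W \<in> vf U \<Longrightarrow> p \<in> U \<Longrightarrow> K X Y Z W p + K Y Z X W p + K Z X Y W p = 0"
  using rp unfolding is_RPtensor_def by blast
lemma rpD: "X \<in> vf U \<Longrightarrow> Y \<in> vf U \<Longrightarrow> Z \<in> vf U \<Longrightarrow> W \<in> vf U \<Longrightarrow> p \<in> U \<Longrightarrow> K X Y (PF P Z) (PF P W) p = K X Y Z W p"
  using rp unfolding is_RPtensor_def by blast

lemma K_Y: assumes "X \<in> vf U" "Y \<in> vf U" "Z \<in> vf U" "W \<in> vf U" "p \<in> U"
  shows "K X Y Z W p = (\<Sum>b\<in>Basis. (Y p \<bullet> b) * K X (cf b) Z W p)"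
proof -
  have "K X Y Z W p = - K Y X Z W p" by (rule rpA[OF assms])
  also have "\<dots> = - (\<Sum>b\<in>Basis. (Y p \<bullet> b) * K (cf b) X Z W p)" by (simp only: K_X[OF assms(2,1,3,5)])
  also have "\<dots> = (\<Sum>b\<in>Basis. (Y p \<bullet> b) * K X (cf b) Z W p)"
  proof -
    have "K (cf b) X Z W p = - K X (cf b) Z W p" for b by (rule rpA[OF vf_cf assms(1,3,4,5)])
    thus ?thesis by (simp add: sum_negf)
  qed
  finally show ?thesis .
qed

lemma K_Z: assumes "X \<in> vf U" "Y \<in> vf U" "Z \<in> vf U" "W \<in> vf U" "p \<in> U"
  shows "K X Y Z W p = (\<Sum>c\<in>Basis. (Z p \<bullet> c) * K X Y (cf c) W p)"
proof -
  have "K X Y Z W p = - K X Y W Z p" by (rule rpB[OF assms])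
  also have "\<dots> = - (\<Sum>c\<in>Basis. (Z p \<bullet> c) * K X Y W (cf c) p)" using K_W[OF assms(5), of X Y W Z] by simp
  also have "\<dots> = (\<Sum>c\<in>Basis. (Z p \<bullet> c) * K X Y (cf c) W p)"
  proof -
    have "K X Y W (cf c) p = - K X Y (cf c) W p" for c by (rule rpB[OF assms(1,2,4) vf_cf assms(5)])
    thus ?thesis by (simp add: sum_negf)
  qed
  finally show ?thesis .
qed

definition kk where "kk p a b c d = K (cf a) (cf b) (cf c) (cf d) p"
definition kf where "kf p x y z w = (\<Sum>a\<in>Basis. (x \<bullet> a) * (\<Sum>b\<in>Basis. (y \<bullet> b) * (\<Sum>c\<in>Basis. (z \<bullet> c) *
    (\<Sum>d\<in>Basis. (w \<bullet> d) * kk p a b c d))))"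

lemma K_full: assumes X: "X \<in> vf U" and Y: "Y \<in> vf U" and Z: "Z \<in> vf U" and W: "W \<in> vf U" and p: "p \<in> U"
  shows "K X Y Z W p = kf p (X p) (Y p) (Z p) (W p)"
proof -
  have s1: "K X Y Z W p = (\<Sum>a\<in>Basis. (X p \<bullet> a) * K (cf a) Y Z W p)" by (rule K_X[OF X Y Z p])
  have s2: "K (cf a) Y Z W p = (\<Sum>b\<in>Basis. (Y p \<bullet> b) * K (cf a) (cf b) Z W p)" for a
    by (rule K_Y[OF vf_cf Y Z W p])
  have s3: "K (cf a) (cf b) Z W p = (\<Sum>c\<in>Basis. (Z p \<bullet> c) * K (cf a) (cf b) (cf c) W p)" for a b
    by (rule K_Z[OF vf_cf vf_cf Z W p])
  have s4: "K (cf a) (cf b) (cf c) W p = (\<Sum>d\<in>Basis. (W p \<bullet> d) * kk p a b c d)" for a b c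
    unfolding kk_def by (rule K_W[OF p])
  show ?thesis by (simp only: s1 s2 s3 s4 kf_def)
qed

lemma kf_cf: "p \<in> U \<Longrightarrow> kf p x y z w = K (cf x) (cf y) (cf z) (cf w) p"
  using K_full[OF vf_cf vf_cf vf_cf vf_cf] by (simp add: cf_def)

lemma kf_a1: "kf p (x + x') y z w = kf p x y z w + kf p x' y z w"
  unfolding kf_def by (simp add: inner_add_left distrib_left distrib_right sum.distrib)
lemma kf_a2: "kf p x (y + y') z w = kf p x y z w + kf p x y' z w"
  unfolding kf_def by (simp add: inner_add_left distrib_left distrib_right sum.distrib)
lemma kf_a3: "kf p x y (z + z') w = kf p x y z w + kf p x y z' w"
  unfolding kf_def by (simp add: inner_add_left distrib_left distrib_right sum.distrib)
lemma kf_a4: "kf p x y z (w + w') = kf p x y z w + kf p x y z w'"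
  unfolding kf_def by (simp add: inner_add_left distrib_left distrib_right sum.distrib)
lemma kf_s1: "kf p (c *\<^sub>R x) y z w = c * kf p x y z w"
  unfolding kf_def by (simp add: sum_distrib_left mult_ac)
lemma kf_s2: "kf p x (c *\<^sub>R y) z w = c * kf p x y z w"
  unfolding kf_def by (simp add: sum_distrib_left mult_ac)
lemma kf_s3: "kf p x y (c *\<^sub>R z) w = c * kf p x y z w"
  unfolding kf_def by (simp add: sum_distrib_left mult_ac)
lemma kf_s4: "kf p x y z (c *\<^sub>R w) = c * kf p x y z w"
  unfolding kf_def by (simp add: sum_distrib_left mult_ac)

lemma kf_ML: "ML4 (kf p)"
  unfolding ML4_def by (auto intro!: linearI simp: kf_a1 kf_a2 kf_a3 kf_a4 kf_s1 kf_s2 kf_s3 kf_s4)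

lemma kf_RP: assumes p: "p \<in> U" shows "RP4 p (kf p)"
proof -
  have "kf p x y (P p z) (P p w) = kf p x y z w" for x y z w
  proof -
    have "kf p x y (P p z) (P p w) = K (cf x) (cf y) (PF P (cf z)) (PF P (cf w)) p"
      using K_full[OF vf_cf vf_cf vf_PF[OF vf_cf] vf_PF[OF vf_cf] p] by (simp add: cf_def PF_def)
    thus ?thesis using rpD[OF vf_cf vf_cf vf_cf vf_cf p] kf_cf[OF p] by simp
  qed
  moreover have "kf p x y z w = - kf p y x z w" for x y z w
    unfolding kf_cf[OF p] by (rule rpA[OF vf_cf vf_cf vf_cf vf_cf p])
  moreover have "kf p x y z w = - kf p x y w z" for x y z w
    unfolding kf_cf[OF p] by (rule rpB[OF vf_cf vf_cf vf_cf vf_cf p])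
  moreover have "kf p x y z w + kf p y z x w + kf p z x y w = 0" for x y z w
    unfolding kf_cf[OF p] by (rule rpC[OF vf_cf vf_cf vf_cf vf_cf p])
  ultimately show ?thesis unfolding RP4_def by blast
qed

lemma R_pt: assumes X: "X \<in> vf U" and Y: "Y \<in> vf U" and Z: "Z \<in> vf U" and W: "W \<in> vf U" and p: "p \<in> U"
  shows "curv4 g nabla X Y Z W p = kf p (X p) (Y p) (Z p) (W p) - g p (Cv p (X p) (Y p) (Z p)) (W p)"
proof -
  have "K X Y Z W p = g p (curv nabla X Y Z p + Cv p (X p) (Y p) (Z p)) (W p)"
    by (simp add: curv4_def gF_def Rel[OF X Y Z p])
  thus ?thesis using K_full[OF assms] p by (simp add: curv4_def gF_def)
qed

end



context ctx begin

definition cp where "cp p x y z w = (g p (Om p) (Om p) / 16) * ((1/2) * psi1p (g p) (g p) x y (P p z) (P p w))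
     + psi1p (g p) (S1p p) x y z w + psi1p (g p) (S2p p) x y (P p z) (P p w)"

lemma cp_a1: "p \<in> U \<Longrightarrow> cp p (x + x') y z w = cp p x y z w + cp p x' y z w"
  unfolding cp_def psi1p_def S1p_def S2p_def by (simp add: algebra_simps add_divide_distrib diff_divide_distrib)
lemma cp_a2: "p \<in> U \<Longrightarrow> cp p x (y + y') z w = cp p x y z w + cp p x y' z w"
  unfolding cp_def psi1p_def S1p_def S2p_def by (simp add: algebra_simps add_divide_distrib diff_divide_distrib)
lemma cp_a3: "p \<in> U \<Longrightarrow> cp p x y (z + z') w = cp p x y z w + cp p x y z' w"
  unfolding cp_def psi1p_def S1p_def S2p_def by (simp add: algebra_simps add_divide_distrib diff_divide_distrib)
lemma cp_a4: "p \<in> U \<Longrightarrow> cp p x y z (w + w') = cp p x y z w + cp p x y z w'"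
  unfolding cp_def psi1p_def S1p_def S2p_def by (simp add: algebra_simps add_divide_distrib diff_divide_distrib)
lemma cp_s1: "p \<in> U \<Longrightarrow> cp p (c *\<^sub>R x) y z w = c * cp p x y z w"
  unfolding cp_def psi1p_def S1p_def S2p_def by (simp add: algebra_simps add_divide_distrib diff_divide_distrib)
lemma cp_s2: "p \<in> U \<Longrightarrow> cp p x (c *\<^sub>R y) z w = c * cp p x y z w"
  unfolding cp_def psi1p_def S1p_def S2p_def by (simp add: algebra_simps add_divide_distrib diff_divide_distrib)
lemma cp_s3: "p \<in> U \<Longrightarrow> cp p x y (c *\<^sub>R z) w = c * cp p x y z w"
  unfolding cp_def psi1p_def S1p_def S2p_def by (simp add: algebra_simps add_divide_distrib diff_divide_distrib)
lemma cp_s4: "p \<in> U \<Longrightarrow> cp p x y z (c *\<^sub>R w) = c * cp p x y z w"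
  unfolding cp_def psi1p_def S1p_def S2p_def by (simp add: algebra_simps add_divide_distrib diff_divide_distrib)

lemma cp_ML: "p \<in> U \<Longrightarrow> ML4 (cp p)"
  unfolding ML4_def by (auto intro!: linearI simp: cp_a1 cp_a2 cp_a3 cp_a4 cp_s1 cp_s2 cp_s3 cp_s4)

lemma TR4: assumes p: "p \<in> U" and fr: "FRM p f1 f2 f3 f4"
  and B1: "\<And>y. linear (\<lambda>x. B x y)" and B2: "\<And>x. linear (B x)"
  shows "(\<Sum>i\<in>Basis. \<Sum>j\<in>Basis. ginv g p i j * B i j) = B f1 f1 + B f2 f2 + B f3 f3 + B f4 f4"
  using TR_list[OF p _ B1 B2, of "[f1, f2, f3, f4]"] fr by (simp add: FRM_def add.assoc)

lemma TT: assumes p: "p \<in> U" and fr: "FRM p f1 f2 f3 f4" and F: "ML4 F"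
  shows "(\<Sum>i\<in>Basis. \<Sum>j\<in>Basis. \<Sum>k\<in>Basis. \<Sum>s\<in>Basis. ginv g p i j * ginv g p k s * F k i j s)
    = (let T = (\<lambda>i j. F f1 i j f1 + F f2 i j f2 + F f3 i j f3 + F f4 i j f4) in
        T f1 f1 + T f2 f2 + T f3 f3 + T f4 f4)"
proof -
  define T where "T = (\<lambda>i j. F f1 i j f1 + F f2 i j f2 + F f3 i j f3 + F f4 i j f4)"
  have inner: "(\<Sum>k\<in>Basis. \<Sum>s\<in>Basis. ginv g p k s * F k i j s) = T i j" for i j
    unfolding T_def by (rule TR4[OF p fr]) (use F in \<open>auto simp: ML4_def\<close>)
  have lT1: "linear (\<lambda>i. T i j)" for j unfolding T_def
    by (intro linear_compose_add) (use F in \<open>auto simp: ML4_def\<close>)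
  have lT2: "linear (T i)" for i unfolding T_def
    by (intro linear_compose_add) (use F in \<open>auto simp: ML4_def\<close>)
  have "(\<Sum>i\<in>Basis. \<Sum>j\<in>Basis. \<Sum>k\<in>Basis. \<Sum>s\<in>Basis. ginv g p i j * ginv g p k s * F k i j s)
     = (\<Sum>i\<in>Basis. \<Sum>j\<in>Basis. ginv g p i j * (\<Sum>k\<in>Basis. \<Sum>s\<in>Basis. ginv g p k s * F k i j s))"
    by (simp add: sum_distrib_left mult.assoc)
  also have "\<dots> = (\<Sum>i\<in>Basis. \<Sum>j\<in>Basis. ginv g p i j * T i j)" by (simp add: inner)
  also have "\<dots> = T f1 f1 + T f2 f2 + T f3 f3 + T f4 f4" by (rule TR4[OF p fr lT1 lT2])
  finally show ?thesis by (simp add: T_def Let_def)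
qed

lemma FRM_facts: assumes p: "p \<in> U" and fr: "FRM p f1 f2 f3 f4"
  shows "g p f1 f1 = 1" "g p f2 f2 = 1" "g p f3 f3 = 1" "g p f4 f4 = 1"
    "g p f1 f2 = 0" "g p f1 f3 = 0" "g p f1 f4 = 0" "g p f2 f3 = 0" "g p f2 f4 = 0" "g p f3 f4 = 0"
    "g p f2 f1 = 0" "g p f3 f1 = 0" "g p f4 f1 = 0" "g p f3 f2 = 0" "g p f4 f2 = 0" "g p f4 f3 = 0"
    "P p f1 = f1" "P p f2 = f2" "P p f3 = - f3" "P p f4 = - f4"
  using fr gs[OF p] by (auto simp: FRM_def)

lemma gexp: assumes p: "p \<in> U" and fr: "FRM p f1 f2 f3 f4"
  shows "g p u v = g p u f1 * g p v f1 + g p u f2 * g p v f2 + g p u f3 * g p v f3 + g p u f4 * g p v f4"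
proof -
  have "v = g p v f1 *\<^sub>R f1 + g p v f2 *\<^sub>R f2 + g p v f3 *\<^sub>R f3 + g p v f4 *\<^sub>R f4"
    using fr by (simp add: FRM_def SPL_def add.assoc)
  hence "g p u v = g p u (g p v f1 *\<^sub>R f1 + g p v f2 *\<^sub>R f2 + g p v f3 *\<^sub>R f3 + g p v f4 *\<^sub>R f4)" by simp
  thus ?thesis using p by (simp add: mult.commute)
qed

lemma cp_trace: assumes p: "p \<in> U" and fr: "FRM p f1 f2 f3 f4"
  shows "(let T = (\<lambda>i j. cp p f1 i j f1 + cp p f2 i j f2 + cp p f3 i j f3 + cp p f4 i j f4) in
        T f1 f1 + T f2 f2 + T f3 f3 + T f4 f4) =
     (4 * (g p (Nv p f1) (P p f1) + g p (Nv p f2) (P p f2) + g p (Nv p f3) (P p f3) + g p (Nv p f4) (P p f4))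
      + 5 * g p (Om p) (Om p)) / 8"
  using p FRM_facts[OF p fr] gexp[OF p fr, of "Om p" "Om p"]
  unfolding cp_def psi1p_def S1p_def S2p_def Qv_def Let_def
  by (simp add: algebra_simps)

lemma cp_trace_star: assumes p: "p \<in> U" and fr: "FRM p f1 f2 f3 f4"
  shows "(let T = (\<lambda>i j. cp p f1 i j (P p f1) + cp p f2 i j (P p f2) + cp p f3 i j (P p f3) + cp p f4 i j (P p f4)) in
        T f1 f1 + T f2 f2 + T f3 f3 + T f4 f4) =
     (- 4 * (g p (Nv p f1) f1 + g p (Nv p f2) f2 + g p (Nv p f3) f3 + g p (Nv p f4) f4)
      + g p (Om p) (P p (Om p))) / 8"
  using p FRM_facts[OF p fr] gexp[OF p fr, of "Om p" "Om p"] gexp[OF p fr, of "Om p" "P p (Om p)"]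
  unfolding cp_def psi1p_def S1p_def S2p_def Qv_def Let_def
  by (simp add: algebra_simps gP1)

lemma k_traces: assumes p: "p \<in> U" and fr: "FRM p f1 f2 f3 f4"
  and k: "\<And>x y z w. k x y z w = a * Dd p f1 f2 x y * Dd p f1 f2 z w + b * Dd p f3 f4 x y * Dd p f3 f4 z w"
  shows "(let T = (\<lambda>i j. k f1 i j f1 + k f2 i j f2 + k f3 i j f3 + k f4 i j f4) in
        T f1 f1 + T f2 f2 + T f3 f3 + T f4 f4) = -2 * a - 2 * b"
    "(let T = (\<lambda>i j. k f1 i j (P p f1) + k f2 i j (P p f2) + k f3 i j (P p f3) + k f4 i j (P p f4)) in
        T f1 f1 + T f2 f2 + T f3 f3 + T f4 f4) = 2 * b - 2 * a"
  using p FRM_facts[OF p fr] unfolding k Let_def Dd_def by (simp_all add: algebra_simps)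

lemma KM: assumes p: "p \<in> U" and fr: "FRM p f1 f2 f3 f4"
  shows "a * Dd p f1 f2 x y * Dd p f1 f2 z w + b * Dd p f3 f4 x y * Dd p f3 f4 z w
     = (- (a + b) / 4) * ((1/2) * psi1p (g p) (g p) x y z w + (1/2) * psi1p (g p) (g p) x y (P p z) (P p w))
       + ((b - a) / 4) * psi1p (g p) (\<lambda>u v. g p u (P p v)) x y z w"
  using p FRM_facts[OF p fr] unfolding psi1p_def Dd_def
  by (simp add: gexp[OF p fr, of y z] gexp[OF p fr, of x w] gexp[OF p fr, of x z] gexp[OF p fr, of y w]
     gexp[OF p fr, of y "P p z"] gexp[OF p fr, of x "P p w"] gexp[OF p fr, of x "P p z"] gexp[OF p fr, of y "P p w"]
     gP1 algebra_simps add_divide_distrib diff_divide_distrib)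

end



lemma ML4_diff: "ML4 F \<Longrightarrow> ML4 G \<Longrightarrow> ML4 (\<lambda>x y z w. F x y z w - G x y z w)"
  unfolding ML4_def by (auto intro: linear_compose_sub)

context ctx begin

lemma ML4_Pw: assumes p: "p \<in> U" and F: "ML4 F" shows "ML4 (\<lambda>x y z w. F x y z (P p w))"
proof -
  have "linear (\<lambda>w. F x y z (P p w))" for x y z
    using linear_compose[OF Pl[OF p], of "F x y z"] F by (simp add: o_def ML4_def)
  thus ?thesis using F by (simp add: ML4_def)
qed

lemma ct_nab: assumes p: "p \<in> U"
  shows "covtheta g P nabla nabla (cf i) (cf j) p = g p (Nv p i) j"
  using dd_th[OF vf_cf vf_cf p, of i j] theta_Om[OF p, of "nabla (cf i) (cf j)"]
  by (simp add: covtheta_def cf_def)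

lemma ct_nabP: assumes p: "p \<in> U"
  shows "covtheta g P nabla nabla (cf i) (PF P (cf j)) p = g p (Nv p i) (P p j)"
  using dd_th[OF vf_cf vf_PF[OF vf_cf] p, of i j] theta_Om[OF p, of "nabla (cf i) (PF P (cf j))"]
  by (simp add: covtheta_def cf_def PF_def)

lemma ct_Dt: assumes A: "A \<in> vf U" and B: "B \<in> vf U" and p: "p \<in> U"
  shows "covtheta g P nabla Dt A (PF P B) p = g p (Nv p (A p)) (P p (B p)) - g p (Om p) (Qv p (A p) (P p (B p)))"
  using dd_th[OF A vf_PF[OF B] p] theta_Om[OF p, of "Dt A (PF P B)"] Dt_eq[OF p, of A "PF P B"]
  by (simp add: covtheta_def PF_def p)

end

context ctx2 begin

lemma main_pt: assumes X: "X \<in> vf U" and Y: "Y \<in> vf U" and Z: "Z \<in> vf U" and W: "W \<in> vf U" and p: "p \<in> U"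
  shows "curv4 g nabla X Y Z W p =
      (1/64) * (8 * tau g nabla p + 4 * deltaP g P nabla p + 5 * theta g P nabla (Omega g P nabla) p)
        * (pi1 g X Y Z W p + pi2 g P X Y Z W p)
    + (1/64) * (8 * taustar g P nabla p - 4 * divOmega g P nabla p
        + theta g P nabla (PF P (Omega g P nabla)) p) * pi3 g P X Y Z W p
    - (theta g P nabla (Omega g P nabla) p / 16) * pi2 g P X Y Z W p
    - psi1 g (\<lambda>A B q. (1/16) * theta g P nabla A q * theta g P nabla B q) X Y Z W p
    - psi2 g P (\<lambda>A B q. - (1/4) * covtheta g P nabla (Dtil g P nabla) A (PF P B) q
        - (1/16) * theta g P nabla (PF P A) q * theta g P nabla (PF P B) q) X Y Z W p"
proof -
  obtain f1 f2 f3 f4 where fr: "FRM p f1 f2 f3 f4" using FRM_ex[OF p] by blast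
  define a where "a = kf p f1 f2 f1 f2"
  define b where "b = kf p f3 f4 f3 f4"
  have kd: "kf p x y z w = a * Dd p f1 f2 x y * Dd p f1 f2 z w + b * Dd p f3 f4 x y * Dd p f3 f4 z w" for x y z w
    unfolding a_def b_def by (rule decomp[OF p kf_ML kf_RP[OF p] fr])
  have Rg: "curv4 g nabla A B C D p = kf p (A p) (B p) (C p) (D p) - cp p (A p) (B p) (C p) (D p)"
    if "A \<in> vf U" "B \<in> vf U" "C \<in> vf U" "D \<in> vf U" for A B C D
    using R_pt[OF that p] I1[OF p] by (simp add: cp_def)
  let ?dl = "g p (Nv p f1) (P p f1) + g p (Nv p f2) (P p f2) + g p (Nv p f3) (P p f3) + g p (Nv p f4) (P p f4)"
  let ?dv = "g p (Nv p f1) f1 + g p (Nv p f2) f2 + g p (Nv p f3) f3 + g p (Nv p f4) f4"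
  let ?OO = "g p (Om p) (Om p)"
  let ?OPO = "g p (Om p) (P p (Om p))"
  have MLr: "ML4 (\<lambda>x y z w. kf p x y z w - cp p x y z w)" by (rule ML4_diff[OF kf_ML cp_ML[OF p]])
  have tau_v: "tau g nabla p = (-2 * a - 2 * b) - (4 * ?dl + 5 * ?OO) / 8"
  proof -
    have "tau g nabla p = (\<Sum>i\<in>Basis. \<Sum>j\<in>Basis. \<Sum>k\<in>Basis. \<Sum>s\<in>Basis.
       ginv g p i j * ginv g p k s * (\<lambda>x y z w. kf p x y z w - cp p x y z w) k i j s)"
      unfolding tau_def using Rg[OF vf_cf vf_cf vf_cf vf_cf] by (simp add: cf_def)
    also note TT[OF p fr MLr]
    finally show ?thesis using k_traces(1)[OF p fr kd] cp_trace[OF p fr] unfolding Let_def by linarith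
  qed
  have MLs: "ML4 (\<lambda>x y z w. kf p x y z (P p w) - cp p x y z (P p w))"
    using ML4_Pw[OF p MLr] by simp
  have taus_v: "taustar g P nabla p = (2 * b - 2 * a) - (- 4 * ?dv + ?OPO) / 8"
  proof -
    have "taustar g P nabla p = (\<Sum>i\<in>Basis. \<Sum>j\<in>Basis. \<Sum>k\<in>Basis. \<Sum>s\<in>Basis.
       ginv g p i j * ginv g p k s * (\<lambda>x y z w. kf p x y z (P p w) - cp p x y z (P p w)) k i j s)"
      unfolding taustar_def using Rg[OF vf_cf vf_cf vf_cf vf_PF[OF vf_cf]] by (simp add: cf_def PF_def)
    also note TT[OF p fr MLs]
    finally show ?thesis using k_traces(2)[OF p fr kd] cp_trace_star[OF p fr] unfolding Let_def by linarith
  qed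
  have lN1: "linear (\<lambda>x. g p (Nv p x) y)" for y by (rule linearI) (simp_all add: p)
  have lN2: "linear (\<lambda>y. g p (Nv p x) y)" for x by (rule linearI) (simp_all add: p)
  have lN3: "linear (\<lambda>y. g p (Nv p x) (P p y))" for x by (rule linearI) (simp_all add: p)
  have div_v: "divOmega g P nabla p = ?dv"
    unfolding divOmega_def ct_nab[OF p] by (rule TR4[OF p fr lN1 lN2])
  have delta_v: "deltaP g P nabla p = ?dl"
    unfolding deltaP_def ct_nabP[OF p] by (rule TR4[OF p fr lN1 lN3])
  have thO: "theta g P nabla (Omega g P nabla) p = ?OO" by (rule theta_Om[OF p])
  have thPO: "theta g P nabla (PF P (Omega g P nabla)) p = ?OPO" using theta_Om[OF p] by (simp add: PF_def)
  define x where "x = X p"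
  define y where "y = Y p"
  define z where "z = Z p"
  define w where "w = W p"
  have Rv: "curv4 g nabla X Y Z W p = kf p x y z w - cp p x y z w" unfolding x_def y_def z_def w_def by (rule Rg[OF X Y Z W])
  have pi1v: "pi1 g X Y Z W p = (1/2) * psi1p (g p) (g p) x y z w"
    by (simp add: pi1_def psi1_def psi1p_def gF_def x_def y_def z_def w_def)
  have pi2v: "pi2 g P X Y Z W p = (1/2) * psi1p (g p) (g p) x y (P p z) (P p w)"
    by (simp add: pi2_def psi2_def psi1_def psi1p_def gF_def PF_def x_def y_def z_def w_def)
  have pi3v: "pi3 g P X Y Z W p = psi1p (g p) (\<lambda>u v. g p u (P p v)) x y z w"
    by (simp add: pi3_def psi1_def psi1p_def gF_def PF_def x_def y_def z_def w_def)
  have ps1: "psi1 g (\<lambda>A B q. (1/16) * theta g P nabla A q * theta g P nabla B q) X Y Z W p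
      = psi1p (g p) (S1p p) x y z w"
    by (simp add: psi1_def psi1p_def gF_def S1p_def theta_Om[OF p] x_def y_def z_def w_def)
  have ps2: "psi2 g P (\<lambda>A B q. - (1/4) * covtheta g P nabla (Dtil g P nabla) A (PF P B) q
        - (1/16) * theta g P nabla (PF P A) q * theta g P nabla (PF P B) q) X Y Z W p
      = psi1p (g p) (S2p p) x y (P p z) (P p w)"
    unfolding psi2_def psi1_def
      ct_Dt[OF X vf_PF[OF Z] p] ct_Dt[OF X vf_PF[OF W] p] ct_Dt[OF Y vf_PF[OF Z] p] ct_Dt[OF Y vf_PF[OF W] p]
    using p by (simp add: psi1p_def gF_def S2p_def theta_Om[OF p] x_def y_def z_def w_def PF_def)
  have km: "kf p x y z w = (- (a + b) / 4) * ((1/2) * psi1p (g p) (g p) x y z w + (1/2) * psi1p (g p) (g p) x y (P p z) (P p w))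
       + ((b - a) / 4) * psi1p (g p) (\<lambda>u v. g p u (P p v)) x y z w"
    unfolding kd by (rule KM[OF p fr])
  show ?thesis unfolding Rv pi1v pi2v pi3v ps1 ps2 thO thPO tau_v taus_v div_v delta_v km cp_def
    by (simp add: algebra_simps add_divide_distrib diff_divide_distrib)
qed

end


theorem theorem5p3:
  fixes U :: "'a::euclidean_space set"
    and g :: "'a \<Rightarrow> 'a \<Rightarrow> 'a \<Rightarrow> real"
    and P :: "'a \<Rightarrow> 'a \<Rightarrow> 'a"
    and nabla :: "('a \<Rightarrow> 'a) \<Rightarrow> ('a \<Rightarrow> 'a) \<Rightarrow> ('a \<Rightarrow> 'a)"
  assumes "rapm U g P"
    and "is_LC U g nabla"
    and "is_W1 U g P nabla"
    and "is_RPtensor U P (curv4 g (Dtil g P nabla))"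
  shows "\<forall>X\<in>vf U. \<forall>Y\<in>vf U. \<forall>Z\<in>vf U. \<forall>W\<in>vf U. \<forall>p\<in>U.
    curv4 g nabla X Y Z W p =
      (1/64) * (8 * tau g nabla p + 4 * deltaP g P nabla p + 5 * theta g P nabla (Omega g P nabla) p)
        * (pi1 g X Y Z W p + pi2 g P X Y Z W p)
    + (1/64) * (8 * taustar g P nabla p - 4 * divOmega g P nabla p
        + theta g P nabla (PF P (Omega g P nabla)) p) * pi3 g P X Y Z W p
    - (theta g P nabla (Omega g P nabla) p / 16) * pi2 g P X Y Z W p
    - psi1 g (\<lambda>A B q. (1/16) * theta g P nabla A q * theta g P nabla B q) X Y Z W p
    - psi2 g P (\<lambda>A B q. - (1/4) * covtheta g P nabla (Dtil g P nabla) A (PF P B) q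
        - (1/16) * theta g P nabla (PF P A) q * theta g P nabla (PF P B) q) X Y Z W p"
proof -
  interpret c: ctx2 U g P nabla
    by (intro ctx2.intro ctx.intro ctx2_axioms.intro assms)
  show ?thesis using c.main_pt by blast
qed

end
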